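(* Consider the interval model $Y_t={\bf Z}_t'{\boldsymbol\theta}^0+u_t$, $t=1,\dots,T$, described in the context, with fixed dimension $p$. Suppose: (A1) $\{Y_t,X_{1,t},\dots,X_{J,t}\}$ are strictly stationary and ergodic interval stochastic processes with $\mathbb{E}\|Y_t\|_K^4<\infty$ and $\mathbb{E}\|X_{j,t}\|_K^4<\infty$ for $j=1,\dots,J$; the interval innovation $\{u_t\}$ satisfies $\mathbb{E}(u_t\mid\mathcal{I}_{t-1})=[0,0]$ a.s. (equivalently $\mathbb{E}(s_{u_t}(u)\mid\mathcal I_{t-1})=0$ for $u=\pm1$) and $\mathbb{E}(\|u_t\|_K^2\mid\mathcal{I}_{t-1})=\sigma^2$; (A2) the parameter space $\Theta$ is a compact subset of $\mathbb{R}^p$ and ${\boldsymbol\theta}^0$ is an interior point of $\Theta$; (A3) the matrices $\mathbb{E}[\langle s_{{\bf Z}_t},s'_{{\bf Z}_t}\rangle_K]$ and $\mathbb{E}[\langle s_{{\bf Z}_t},s_{u_t({\boldsymbol\theta})}\rangle_K\langle s_{u_t({\boldsymbol\theta})},s'_{{\bf Z}_t}\rangle_K]$, where $u_t({\boldsymbol\theta})=Y_t-{\bf Z}_t'{\boldsymbol\theta}$, are positive definite for all ${\boldsymbol\theta}$ in a small neighborhood of ${\boldsymbol\theta}^0$; (A4) $\lambda_T/\sqrt{T}\to0$ and $\lambda_T T^{(\gamma-1)/2}\to\infty$ as $T\to\infty$. Then the penalized minimum $D_K$-distance estimator $\hat{\boldsymbol\theta}_T$ satisfies $\|\hat{\boldsymbol\theta}_T-{\boldsymbol\theta}^0\|=O_p(1/\sqrt{T})$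 as $T\to\infty$, where $\|\cdot\|$ is the Euclidean norm.
   Context: Intervals: an (extended) interval is an ordered pair $A=[A_L,A_R]$ of real numbers, where $A_R<A_L$ is allowed. Operations: $A+B=[A_L+B_L,A_R+B_R]$, $A-B=[A_L-B_L,A_R-B_R]$ (Hukuhara difference), $cA=[cA_L,cA_R]$ for $c\in\mathbb{R}$. The support function of $A$ on $S^0=\{-1,1\}$ is $s_A(1)=A_R$, $s_A(-1)=-A_L$. Fix a kernel $K:\{-1,1\}^2\to\mathbb{R}$ that is symmetric positive definite: $K(1,-1)=K(-1,1)$, $K(1,1)>0$, $K(1,1)K(-1,-1)>K(1,-1)^2$. Define $\langle s_A,s_B\rangle_K=\sum_{u,v\in\{-1,1\}}K(u,v)s_A(u)s_B(v)$, $\|A\|_K^2=\langle s_A,s_A\rangle_K$ and the $D_K$-distance $D_K(A,B)=\|A-B\|_K$. For a column vector of intervals ${\bf A}=(A_1,\dots,A_p)'$ and an interval $C$, $\langle s_{\bf A},s'_{\bf A}\rangle_K$ is the $p\times p$ matrix with $(i,j)$ entry $\langle s_{A_i},s_{A_j}\rangle_K$, $\langle s_{\bf A},s_C\rangle_K$ is the $p$-vector with entries $\langle s_{A_i},s_C\rangle_K$, and $\langle s_C,s'_{\bf A}\rangle_K$ is its transpose; for ${\boldsymbol\theta}\in\mathbb{R}^p$, ${\bf A}'{\boldsymbol\theta}=\sum_j\theta_jA_j$. Model (ACIX): $Y_t$ and $X_{1,t},\dots,X_{J,t}$ are interval-valued random variables (time series) on a probability space; $I_0=[-1/2,1/2]$;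 ${\bf X}_t=(X_{1,t},\dots,X_{J,t})'$; ${\bf Z}_t=([1,1],I_0,Y_{t-1},\dots,Y_{t-q},{\bf X}_t',\dots,{\bf X}_{t-s}')'$ is a vector of $p$ intervals; $Y_t={\bf Z}_t'{\boldsymbol\theta}^0+u_t$ with true parameter ${\boldsymbol\theta}^0\in\mathbb{R}^p$ and interval innovation $u_t$; $\mathcal{I}_{t-1}$ denotes the information set at time $t-1$. Estimators: the minimum $D_K$-distance estimator $\tilde{\boldsymbol\theta}_T=(\tilde\theta_1,\dots,\tilde\theta_p)'=\arg\min_{\boldsymbol\theta}\sum_{t=1}^T\|Y_t-{\bf Z}_t'{\boldsymbol\theta}\|_K^2$, and the penalized (interval adaptive LASSO) estimator $\hat{\boldsymbol\theta}_T=\arg\min_{\boldsymbol\theta}\sum_{t=1}^T\|Y_t-{\bf Z}_t'{\boldsymbol\theta}\|_K^2+\lambda_T\sum_{j=1}^p\hat w_j|\theta_j|$ with adaptive weights $\hat w_j=1/|\tilde\theta_j|^\gamma$, tuning parameter $\lambda_T>0$ and a given constant $\gamma>0$. *)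

theory Defs
  imports "HOL-Probability.Probability"
begin

text \<open>Extended intervals A = [A_L, A_R] are represented as pairs (A_L, A_R) :: real \<times> real.
  The library operations on pairs (componentwise +, -, scaleR) are exactly the interval
  operations A+B, A-B (Hukuhara difference) and cA of the paper.\<close>

type_synonym interval = "real \<times> real"

definition supp :: "interval \<Rightarrow> real \<Rightarrow> real" where
  "supp A u = (if u = 1 then snd A else - fst A)"

definition dirs :: "real set" where
  "dirs = {-1, 1}"

definition spd_kernel :: "(real \<Rightarrow> real \<Rightarrow> real) \<Rightarrow> bool" where
  "spd_kernel K \<longleftrightarrow> K 1 (-1) = K (-1) 1 \<and> K 1 1 > 0 \<and> K 1 1 * K (-1) (-1) > (K 1 (-1))\<^sup>2"

definition ipK :: "(real \<Rightarrow> real \<Rightarrow> real) \<Rightarrow> interval \<Rightarrow> interval \<Rightarrow> real" where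
  "ipK K A B = (\<Sum>u\<in>dirs. \<Sum>v\<in>dirs. K u v * supp A u * supp B v)"

definition normK :: "(real \<Rightarrow> real \<Rightarrow> real) \<Rightarrow> interval \<Rightarrow> real" where
  "normK K A = sqrt (ipK K A A)"

definition I0 :: interval where
  "I0 = (-1/2, 1/2)"

text \<open>The k-th entry (k < p = 2 + q + J(s+1)) of the regressor vector
  Z_t = ([1,1], I_0, Y_{t-1}, ..., Y_{t-q}, X_t', ..., X_{t-s}')', where X_t = (X_{1,t},...,X_{J,t})'.
  X j t is X_{j,t} for 1 \<le> j \<le> J.\<close>
definition Zent :: "nat \<Rightarrow> nat \<Rightarrow> (int \<Rightarrow> 'a \<Rightarrow> interval) \<Rightarrow> (nat \<Rightarrow> int \<Rightarrow> 'a \<Rightarrow> interval)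
    \<Rightarrow> int \<Rightarrow> nat \<Rightarrow> 'a \<Rightarrow> interval" where
  "Zent q J Y X t k \<omega> =
     (if k = 0 then (1, 1)
      else if k = 1 then I0
      else if k < 2 + q then Y (t - int (k - 1)) \<omega>
      else X ((k - (2 + q)) mod J + 1) (t - int ((k - (2 + q)) div J)) \<omega>)"

text \<open>Z_t as a vector of p intervals, the positions being labelled by the finite type 'p
  through a bijection idx onto {0..<p}.\<close>
definition Zvec :: "('p::finite \<Rightarrow> nat) \<Rightarrow> nat \<Rightarrow> nat \<Rightarrow> (int \<Rightarrow> 'a \<Rightarrow> interval)
    \<Rightarrow> (nat \<Rightarrow> int \<Rightarrow> 'a \<Rightarrow> interval) \<Rightarrow> int \<Rightarrow> 'a \<Rightarrow> interval ^ 'p" where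
  "Zvec idx q J Y X t \<omega> = (\<chi> i. Zent q J Y X t (idx i) \<omega>)"

definition lincomb :: "interval ^ 'p::finite \<Rightarrow> real ^ 'p \<Rightarrow> interval" where
  "lincomb A \<theta> = (\<Sum>i\<in>UNIV. (\<theta> $ i) *\<^sub>R (A $ i))"

definition pos_def_mat :: "real ^ 'p ^ 'p::finite \<Rightarrow> bool" where
  "pos_def_mat A \<longleftrightarrow> (\<forall>x. x \<noteq> 0 \<longrightarrow> x \<bullet> (A *v x) > 0)"

text \<open>Information set I_t: sigma-algebra generated by Y_s (s \<le> t) and X_{j,s} (s \<le> t+1,
  1 \<le> j \<le> J); thus I_{t-1} contains Y_{t-1}, Y_{t-2}, ... and X_t, X_{t-1}, ....\<close>
definition info :: "'a measure \<Rightarrow> nat \<Rightarrow> (int \<Rightarrow> 'a \<Rightarrow> interval) \<Rightarrow> (nat \<Rightarrow> int \<Rightarrow> 'a \<Rightarrow> interval)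
    \<Rightarrow> int \<Rightarrow> 'a measure" where
  "info M J Y X t = sigma (space M)
     ({Y s -` B \<inter> space M | s B. s \<le> t \<and> B \<in> sets (borel :: interval measure)} \<union>
      {X j s -` B \<inter> space M | j s B. 1 \<le> j \<and> j \<le> J \<and> s \<le> t + 1 \<and> B \<in> sets (borel :: interval measure)})"

text \<open>Joint path of the process W_t = (Y_t, X_{1,t}, ..., X_{J,t}), indexed by (t, j).\<close>
definition joint_path :: "nat \<Rightarrow> (int \<Rightarrow> 'a \<Rightarrow> interval) \<Rightarrow> (nat \<Rightarrow> int \<Rightarrow> 'a \<Rightarrow> interval)
    \<Rightarrow> 'a \<Rightarrow> (int \<times> nat \<Rightarrow> interval)" where
  "joint_path J Y X \<omega> = (\<lambda>(t, j). if j = 0 then Y t \<omega> else if j \<le> J then X j t \<omega> else (0, 0))"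

definition path_space :: "(int \<times> nat \<Rightarrow> interval) measure" where
  "path_space = Pi\<^sub>M UNIV (\<lambda>_. borel)"

definition shift :: "(int \<times> nat \<Rightarrow> interval) \<Rightarrow> (int \<times> nat \<Rightarrow> interval)" where
  "shift f = (\<lambda>(t, j). f (t + 1, j))"

definition strictly_stationary :: "'a measure \<Rightarrow> ('a \<Rightarrow> (int \<times> nat \<Rightarrow> interval)) \<Rightarrow> bool" where
  "strictly_stationary M W \<longleftrightarrow>
     distr M path_space (\<lambda>\<omega>. shift (W \<omega>)) = distr M path_space W"

definition ergodic_proc :: "'a measure \<Rightarrow> ('a \<Rightarrow> (int \<times> nat \<Rightarrow> interval)) \<Rightarrow> bool" where
  "ergodic_proc M W \<longleftrightarrow>
     (\<forall>A \<in> sets path_space. shift -` A \<inter> space path_space = A \<longrightarrow>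
        measure M (W -` A \<inter> space M) \<in> {0, 1})"

definition bigO_p :: "'a measure \<Rightarrow> (nat \<Rightarrow> 'a \<Rightarrow> real) \<Rightarrow> (nat \<Rightarrow> real) \<Rightarrow> bool" where
  "bigO_p M Xn a \<longleftrightarrow>
     (\<forall>\<epsilon>>0. \<exists>C. \<exists>N. \<forall>n\<ge>N. measure M {\<omega> \<in> space M. \<bar>Xn n \<omega>\<bar> > C * a n} < \<epsilon>)"

definition DK_obj :: "(real \<Rightarrow> real \<Rightarrow> real) \<Rightarrow> (int \<Rightarrow> 'a \<Rightarrow> interval) \<Rightarrow> (int \<Rightarrow> 'a \<Rightarrow> interval ^ 'p::finite)
    \<Rightarrow> nat \<Rightarrow> 'a \<Rightarrow> real ^ 'p \<Rightarrow> real" where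
  "DK_obj K Y Z T \<omega> \<theta> = (\<Sum>t\<in>{1..int T}. (normK K (Y t \<omega> - lincomb (Z t \<omega>) \<theta>))\<^sup>2)"

text \<open>Adaptive weights w_j = 1/|tilde theta_j|^gamma (the coordinates with tilde theta_j = 0,
  whose weight is +infinity, are handled by restricting the domain, see adalasso_dom).\<close>
definition adalasso_obj :: "(real \<Rightarrow> real \<Rightarrow> real) \<Rightarrow> (int \<Rightarrow> 'a \<Rightarrow> interval) \<Rightarrow> (int \<Rightarrow> 'a \<Rightarrow> interval ^ 'p::finite)
    \<Rightarrow> real \<Rightarrow> real \<Rightarrow> real ^ 'p \<Rightarrow> nat \<Rightarrow> 'a \<Rightarrow> real ^ 'p \<Rightarrow> real" where
  "adalasso_obj K Y Z lam \<gamma> \<theta>tilde T \<omega> \<theta> =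
     DK_obj K Y Z T \<omega> \<theta> +
     lam * (\<Sum>j\<in>{j. \<theta>tilde $ j \<noteq> 0}. \<bar>\<theta> $ j\<bar> / \<bar>\<theta>tilde $ j\<bar> powr \<gamma>)"

definition adalasso_dom :: "(real ^ 'p::finite) set \<Rightarrow> real ^ 'p \<Rightarrow> (real ^ 'p) set" where
  "adalasso_dom \<Theta> \<theta>tilde = {\<theta> \<in> \<Theta>. \<forall>j. \<theta>tilde $ j = 0 \<longrightarrow> \<theta> $ j = 0}"

end

theory Submission
  imports Defs
begin

lemma sum_dirs: "(\<Sum>u\<in>dirs. f u) = f (-1) + f (1::real)"
  unfolding dirs_def by simp

lemma ipK_expl: "ipK K A B = K 1 1 * snd A * snd B - K 1 (-1) * snd A * fst B
   - K (-1) 1 * fst A * snd B + K (-1) (-1) * fst A * fst B"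
  unfolding ipK_def sum_dirs supp_def by (simp add: algebra_simps)

lemma fst_sum': "fst (\<Sum>i\<in>S. f i) = (\<Sum>i\<in>S. fst (f i))"
  by (induction S rule: infinite_finite_induct) auto

lemma snd_sum': "snd (\<Sum>i\<in>S. f i) = (\<Sum>i\<in>S. snd (f i))"
  by (induction S rule: infinite_finite_induct) auto

lemma ipK_add_left: "ipK K (A + B) C = ipK K A C + ipK K B C"
  unfolding ipK_expl by (simp add: algebra_simps)
lemma ipK_add_right: "ipK K C (A + B) = ipK K C A + ipK K C B"
  unfolding ipK_expl by (simp add: algebra_simps)
lemma ipK_diff_left: "ipK K (A - B) C = ipK K A C - ipK K B C"
  unfolding ipK_expl by (simp add: algebra_simps)
lemma ipK_diff_right: "ipK K C (A - B) = ipK K C A - ipK K C B"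
  unfolding ipK_expl by (simp add: algebra_simps)
lemma ipK_scale_left: "ipK K (r *\<^sub>R A) C = r * ipK K A C"
  unfolding ipK_expl by (simp add: algebra_simps)
lemma ipK_scale_right: "ipK K C (r *\<^sub>R A) = r * ipK K C A"
  unfolding ipK_expl by (simp add: algebra_simps)
lemma ipK_sum_left: "ipK K (\<Sum>i\<in>S. f i) C = (\<Sum>i\<in>S. ipK K (f i) C)"
  unfolding ipK_expl fst_sum' snd_sum' by (simp add: algebra_simps sum_distrib_left sum_distrib_right sum_subtractf sum.distrib)
lemma ipK_sum_right: "ipK K C (\<Sum>i\<in>S. f i) = (\<Sum>i\<in>S. ipK K C (f i))"
  unfolding ipK_expl fst_sum' snd_sum' by (simp add: algebra_simps sum_distrib_left sum_distrib_right sum_subtractf sum.distrib)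
lemma ipK_sym: "spd_kernel K \<Longrightarrow> ipK K A B = ipK K B A"
  unfolding ipK_expl spd_kernel_def by (simp add: algebra_simps)

definition kc :: "(real \<Rightarrow> real \<Rightarrow> real) \<Rightarrow> real" where
  "kc K = (K 1 1 * K (-1) (-1) - (K 1 (-1))\<^sup>2) / (K 1 1 + K (-1) (-1))"

lemma kc_pos: assumes "spd_kernel K" shows "kc K > 0" "K (-1) (-1) > 0"
proof -
  have a: "K 1 1 > 0" and det: "K 1 1 * K (-1) (-1) > (K 1 (-1))\<^sup>2" using assms unfolding spd_kernel_def by auto
  have "K 1 1 * K (-1) (-1) > 0" using det by (smt (verit) zero_le_power2)
  then show d: "K (-1) (-1) > 0" using a by (simp add: zero_less_mult_iff)
  show "kc K > 0" unfolding kc_def using a d det by (intro divide_pos_pos) auto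
qed

lemma quad_lb:
  fixes a b d x y :: real
  assumes a: "a > 0" and d: "d > 0" and det: "a * d > b\<^sup>2"
  shows "a * x\<^sup>2 - 2 * b * x * y + d * y\<^sup>2 \<ge> ((a * d - b\<^sup>2) / (a + d)) * (x\<^sup>2 + y\<^sup>2)"
proof -
  define c where "c = (a * d - b\<^sup>2) / (a + d)"
  have apd: "a + d > 0" using a d by simp
  have ac: "a - c = (a\<^sup>2 + b\<^sup>2) / (a + d)" unfolding c_def using apd by (simp add: field_simps power2_eq_square)
  have dc: "d - c = (d\<^sup>2 + b\<^sup>2) / (a + d)" unfolding c_def using apd by (simp add: field_simps power2_eq_square)
  have acp: "a - c > 0" unfolding ac using apd a by (intro divide_pos_pos) (auto intro: add_pos_nonneg)
  have cad: "c * (a + d) = a * d - b\<^sup>2" unfolding c_def using apd by simp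
  have "(a - c) * (d - c) - b\<^sup>2 = (a * d - b\<^sup>2 - c * (a + d)) + c\<^sup>2"
    by (simp add: algebra_simps power2_eq_square)
  then have key: "(a - c) * (d - c) - b\<^sup>2 = c\<^sup>2" using cad by simp
  have "(a - c) * ((a - c) * x\<^sup>2 - 2 * b * x * y + (d - c) * y\<^sup>2) = ((a - c) * x - b * y)\<^sup>2 + ((a - c) * (d - c) - b\<^sup>2) * y\<^sup>2"
    by (simp add: algebra_simps power2_eq_square)
  also have "\<dots> \<ge> 0" unfolding key by simp
  finally have "(a - c) * x\<^sup>2 - 2 * b * x * y + (d - c) * y\<^sup>2 \<ge> 0"
    using acp by (simp add: zero_le_mult_iff)
  then show ?thesis unfolding c_def[symmetric] by (simp add: algebra_simps)
qed

lemma ipK_lb: assumes "spd_kernel K" shows "ipK K A A \<ge> kc K * ((fst A)\<^sup>2 + (snd A)\<^sup>2)"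
proof -
  have a: "K 1 1 > 0" and det: "K 1 1 * K (-1) (-1) > (K 1 (-1))\<^sup>2" and sy: "K (-1) 1 = K 1 (-1)"
    using assms unfolding spd_kernel_def by auto
  have "ipK K A A = K 1 1 * (snd A)\<^sup>2 - 2 * K 1 (-1) * snd A * fst A + K (-1) (-1) * (fst A)\<^sup>2"
    unfolding ipK_expl sy by (simp add: algebra_simps power2_eq_square)
  also have "\<dots> \<ge> kc K * ((snd A)\<^sup>2 + (fst A)\<^sup>2)"
    unfolding kc_def by (rule quad_lb[OF a kc_pos(2)[OF assms] det])
  finally show ?thesis by (simp add: add.commute)
qed

lemma ipK_nonneg: "spd_kernel K \<Longrightarrow> ipK K A A \<ge> 0"
proof -
  assume a: "spd_kernel K"
  have "kc K * ((fst A)\<^sup>2 + (snd A)\<^sup>2) \<ge> 0" using kc_pos(1)[OF a] by (intro mult_nonneg_nonneg) auto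
  then show ?thesis using ipK_lb[OF a, of A] by linarith
qed

lemma normK_sq: "spd_kernel K \<Longrightarrow> (normK K A)\<^sup>2 = ipK K A A"
  unfolding normK_def using ipK_nonneg by simp

lemma lincomb_add: "lincomb A (\<theta> + \<delta>) = lincomb A \<theta> + lincomb A \<delta>"
  unfolding lincomb_def by (simp add: scaleR_add_left sum.distrib)

lemma ipK_lincomb_left: "ipK K (lincomb A \<delta>) C = (\<Sum>i\<in>UNIV. \<delta> $ i * ipK K (A $ i) C)"
  unfolding lincomb_def ipK_sum_left ipK_scale_left ..

lemma ipK_lincomb_both: "ipK K (lincomb A \<delta>) (lincomb A \<delta>) = (\<Sum>i\<in>UNIV. \<Sum>j\<in>UNIV. \<delta> $ i * \<delta> $ j * ipK K (A $ i) (A $ j))"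
  unfolding lincomb_def ipK_sum_left ipK_scale_left ipK_sum_right ipK_scale_right
  by (simp add: sum_distrib_left algebra_simps) (subst sum.swap, simp add: algebra_simps)

lemma DK_expand:
  fixes Z :: "int \<Rightarrow> 'a \<Rightarrow> interval ^ 'p::finite"
  assumes spd: "spd_kernel K"
    and model: "\<And>t. Y t \<omega> = lincomb (Z t \<omega>) \<theta>0 + u t \<omega>"
  shows "DK_obj K Y Z T \<omega> (\<theta>0 + \<delta>) = DK_obj K Y Z T \<omega> \<theta>0
     - 2 * (\<delta> \<bullet> (\<chi> i. \<Sum>t\<in>{1..int T}. ipK K (Z t \<omega> $ i) (u t \<omega>)))
     + (\<Sum>t\<in>{1..int T}. ipK K (lincomb (Z t \<omega>) \<delta>) (lincomb (Z t \<omega>) \<delta>))"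
proof -
  have e1: "Y t \<omega> - lincomb (Z t \<omega>) (\<theta>0 + \<delta>) = u t \<omega> - lincomb (Z t \<omega>) \<delta>" for t
    using model[of t] by (simp add: lincomb_add)
  have e0: "Y t \<omega> - lincomb (Z t \<omega>) \<theta>0 = u t \<omega>" for t
    using model[of t] by simp
  have e2: "(normK K (u t \<omega> - lincomb (Z t \<omega>) \<delta>))\<^sup>2 = (normK K (u t \<omega>))\<^sup>2
      - 2 * ipK K (lincomb (Z t \<omega>) \<delta>) (u t \<omega>) + ipK K (lincomb (Z t \<omega>) \<delta>) (lincomb (Z t \<omega>) \<delta>)" for t
    unfolding normK_sq[OF spd] ipK_diff_left ipK_diff_right ipK_sym[OF spd, of "u t \<omega>" "lincomb (Z t \<omega>) \<delta>"]
    by simp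
  have e3: "(\<Sum>t\<in>{1..int T}. ipK K (lincomb (Z t \<omega>) \<delta>) (u t \<omega>)) = \<delta> \<bullet> (\<chi> i. \<Sum>t\<in>{1..int T}. ipK K (Z t \<omega> $ i) (u t \<omega>))"
    unfolding ipK_lincomb_left inner_vec_def by (simp add: sum_distrib_left sum.swap[of _ UNIV])
  show ?thesis
    unfolding DK_obj_def e1 e0 e2 sum.distrib sum_subtractf e3[symmetric]
    by (simp add: sum_distrib_left)
qed

lemma gen_bound:
  fixes q s n L P0 P1 a Sn :: real
  assumes "q \<ge> a * n\<^sup>2" "q - 2 * s + P1 \<le> P0" "P1 - P0 \<ge> - L * n" "s \<le> Sn * n" "a > 0" "n \<ge> 0"
    "Sn \<ge> 0" "L \<ge> 0"
  shows "n \<le> (2 * Sn + L) / a"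
proof (cases "n = 0")
  case True
  then show ?thesis using assms by simp
next
  case False
  then have np: "n > 0" using assms(6) by simp
  have "a * n\<^sup>2 \<le> (2 * Sn + L) * n" using assms by (simp add: algebra_simps)
  then have "a * n \<le> 2 * Sn + L" using np by (simp add: power2_eq_square mult.assoc[symmetric])
  then show ?thesis using assms(5) by (simp add: field_simps)
qed

lemma quad_form_eq: "x \<bullet> (A *v x) = (\<Sum>i\<in>UNIV. \<Sum>j\<in>UNIV. x $ i * x $ j * A $ i $ j)"
  by (simp add: inner_vec_def matrix_vector_mult_def sum_distrib_left algebra_simps)

lemma pd_lb:
  fixes A :: "real ^ 'p ^ 'p::finite"
  assumes pd: "pos_def_mat A"
  shows "\<exists>c>0. \<forall>x. (\<Sum>i\<in>UNIV. \<Sum>j\<in>UNIV. x $ i * x $ j * A $ i $ j) \<ge> c * (norm x)\<^sup>2"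
proof -
  let ?f = "\<lambda>x::real^'p. x \<bullet> (A *v x)"
  have cont: "continuous_on (sphere 0 1) ?f"
    by (intro continuous_intros continuous_on_compose2[OF _ continuous_on_id]) (auto intro: linear_continuous_on matrix_vector_mul_linear)
  have ne: "sphere (0::real^'p) 1 \<noteq> {}" by simp
  obtain y where y: "y \<in> sphere 0 1" "\<forall>z \<in> sphere 0 1. ?f y \<le> ?f z"
    using continuous_attains_inf[OF compact_sphere ne cont] by blast
  have "y \<noteq> 0" using y(1) by auto
  then have cpos: "?f y > 0" using pd unfolding pos_def_mat_def by blast
  have "\<forall>x. ?f x \<ge> ?f y * (norm x)\<^sup>2"
  proof
    fix x :: "real^'p"
    show "?f x \<ge> ?f y * (norm x)\<^sup>2"
    proof (cases "x = 0")
      case True then show ?thesis by simp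
    next
      case False
      define z where "z = (1 / norm x) *\<^sub>R x"
      have zs: "z \<in> sphere 0 1" unfolding z_def using False by simp
      have xz: "x = norm x *\<^sub>R z" unfolding z_def using False by simp
      have "?f x = (norm x)\<^sup>2 * ?f z"
        by (subst xz, subst xz) (simp add: matrix_vector_mult_scaleR algebra_simps power2_eq_square)
      moreover have "?f y \<le> ?f z" using y(2) zs by blast
      ultimately show ?thesis by (simp add: mult_right_mono mult.commute)
    qed
  qed
  then show ?thesis using cpos unfolding quad_form_eq by blast
qed

lemma quad_perturb:
  fixes A H :: "'p::finite \<Rightarrow> 'p \<Rightarrow> real" and x :: "real ^ 'p"
  assumes c: "(\<Sum>i\<in>UNIV. \<Sum>j\<in>UNIV. x $ i * x $ j * A i j) \<ge> c * (norm x)\<^sup>2"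
    and close: "\<And>i j. \<bar>H i j - A i j\<bar> \<le> \<eta>" and eta: "\<eta> \<ge> 0"
  shows "(\<Sum>i\<in>UNIV. \<Sum>j\<in>UNIV. x $ i * x $ j * H i j) \<ge> (c - real (CARD('p))^2 * \<eta>) * (norm x)\<^sup>2"
proof -
  have b: "\<bar>x $ i * x $ j * H i j - x $ i * x $ j * A i j\<bar> \<le> \<eta> * (norm x)\<^sup>2" for i j
  proof -
    have "x $ i * x $ j * H i j - x $ i * x $ j * A i j = x $ i * x $ j * (H i j - A i j)"
      by (simp add: algebra_simps)
    then have "\<bar>x $ i * x $ j * H i j - x $ i * x $ j * A i j\<bar> = \<bar>x $ i\<bar> * \<bar>x $ j\<bar> * \<bar>H i j - A i j\<bar>"
      by (simp add: abs_mult)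
    also have "\<dots> \<le> norm x * norm x * \<eta>"
      by (intro mult_mono close) (auto intro: component_le_norm_cart simp: mult_mono)
    finally show ?thesis by (simp add: power2_eq_square algebra_simps)
  qed
  have "\<bar>(\<Sum>i\<in>UNIV. \<Sum>j\<in>UNIV. x $ i * x $ j * H i j) - (\<Sum>i\<in>UNIV. \<Sum>j\<in>UNIV. x $ i * x $ j * A i j)\<bar>
      \<le> (\<Sum>i\<in>(UNIV::'p set). \<Sum>j\<in>(UNIV::'p set). \<eta> * (norm x)\<^sup>2)"
    unfolding sum_subtractf[symmetric]
    by (rule order_trans[OF sum_abs], rule sum_mono, rule order_trans[OF sum_abs], rule sum_mono, rule b)
  also have "\<dots> = real (CARD('p))^2 * \<eta> * (norm x)\<^sup>2" by (simp add: power2_eq_square)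
  finally show ?thesis using c by (simp add: algebra_simps)
qed

locale mp_erg = prob_space N for N :: "'b measure" +
  fixes T :: "'b \<Rightarrow> 'b"
  assumes T_meas[measurable]: "T \<in> measurable N N"
    and T_pres: "distr N N T = N"
    and T_erg: "\<And>A. A \<in> sets N \<Longrightarrow> T -` A \<inter> space N = A \<Longrightarrow> measure N A = 0 \<or> measure N A = 1"
begin

lemma Tpow_meas[measurable]: "(T ^^ k) \<in> measurable N N"
  by (induction k) (auto intro: measurable_comp)

lemma T_int:
  fixes g :: "'b \<Rightarrow> real"
  assumes "integrable N g"
  shows "integrable N (\<lambda>x. g (T x))" "integral\<^sup>L N (\<lambda>x. g (T x)) = integral\<^sup>L N g"
proof -
  have gm: "g \<in> borel_measurable N" using assms by auto
  have "integrable (distr N N T) g" using assms T_pres by simp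
  then show "integrable N (\<lambda>x. g (T x))" using integrable_distr[of T N N g] T_meas by simp
  have "integral\<^sup>L (distr N N T) g = integral\<^sup>L N (\<lambda>x. g (T x))" by (rule integral_distr[OF T_meas gm])
  then show "integral\<^sup>L N (\<lambda>x. g (T x)) = integral\<^sup>L N g" using T_pres by simp
qed

lemma Tpow_int:
  fixes g :: "'b \<Rightarrow> real"
  assumes "integrable N g"
  shows "integrable N (\<lambda>x. g ((T^^k) x)) \<and> integral\<^sup>L N (\<lambda>x. g ((T^^k) x)) = integral\<^sup>L N g"
proof (induction k)
  case 0 then show ?case using assms by simp
next
  case (Suc k)
  have e: "(\<lambda>x. g ((T^^Suc k) x)) = (\<lambda>x. (\<lambda>y. g ((T^^k) y)) (T x))"
    by (simp add: funpow_Suc_right del: funpow.simps)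
  show ?case unfolding e using T_int[of "\<lambda>y. g ((T^^k) y)"] Suc by simp
qed

definition BS :: "('b \<Rightarrow> real) \<Rightarrow> nat \<Rightarrow> 'b \<Rightarrow> real" where
  "BS f n x = (\<Sum>k<n. f ((T^^k) x))"

lemma BS_0[simp]: "BS f 0 x = 0" by (simp add: BS_def)

lemma BS_Suc: "BS f (Suc n) x = f x + BS f n (T x)"
  unfolding BS_def sum.lessThan_Suc_shift
  by (simp add: funpow_Suc_right del: funpow.simps)

lemma comp_meas: "f \<in> borel_measurable N \<Longrightarrow> (\<lambda>x. f ((T^^k) x)) \<in> borel_measurable N"
  using measurable_comp[OF Tpow_meas, of f borel k] by (simp add: comp_def)

lemma BS_meas[measurable]: "f \<in> borel_measurable N \<Longrightarrow> BS f n \<in> borel_measurable N"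
  unfolding BS_def using comp_meas by (intro borel_measurable_sum) auto

lemma BS_int: assumes "integrable N f" shows "integrable N (BS f n)"
  unfolding BS_def by (rule Bochner_Integration.integrable_sum) (use Tpow_int[OF assms] in blast)

fun MX :: "('b \<Rightarrow> real) \<Rightarrow> nat \<Rightarrow> 'b \<Rightarrow> real" where
  "MX f 0 x = 0"
| "MX f (Suc n) x = max (MX f n x) (BS f (Suc n) x)"

lemma MX_nonneg: "MX f n x \<ge> 0"
  by (induction n) auto

lemma MX_ge: "k \<le> n \<Longrightarrow> BS f k x \<le> MX f n x"
proof (induction n)
  case 0 then show ?case by simp
next
  case (Suc n)
  then show ?case by (cases "k = Suc n") auto
qed

lemma MX_attained: "\<exists>k\<le>n. MX f n x = BS f k x"
proof (induction n)
  case 0 then show ?case by simp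
next
  case (Suc n)
  then obtain k where "k \<le> n" "MX f n x = BS f k x" by auto
  then show ?case by (cases "MX f n x \<le> BS f (Suc n) x") (auto simp: max_def intro: exI[of _ "Suc n"] exI[of _ k])
qed

lemma MX_mono: "m \<le> n \<Longrightarrow> MX f m x \<le> MX f n x"
proof (induction n)
  case 0 then show ?case by simp
next
  case (Suc n) then show ?case by (cases "m = Suc n") (auto simp: le_Suc_eq)
qed

lemma MX_meas[measurable]: assumes "f \<in> borel_measurable N" shows "MX f n \<in> borel_measurable N"
proof (induction n)
  case 0 then show ?case by simp
next
  case (Suc n)
  have e: "MX f (Suc n) = (\<lambda>x. max (MX f n x) (BS f (Suc n) x))" by (rule ext) simp
  show ?case unfolding e using Suc BS_meas[OF assms] by (intro borel_measurable_max) auto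
qed

lemma MX_int: "integrable N f \<Longrightarrow> integrable N (MX f n)"
proof (induction n)
  case 0 then show ?case by simp
next
  case (Suc n)
  have e: "MX f (Suc n) = (\<lambda>x. max (MX f n x) (BS f (Suc n) x))" by auto
  show ?case unfolding e using Suc BS_int by auto
qed

lemma MX_point: "indicator {x. MX f n x > 0} x * f x \<ge> MX f n x - MX f n (T x)"
proof (cases "MX f n x > 0")
  case True
  obtain k where k: "k \<le> n" "MX f n x = BS f k x" using MX_attained by blast
  have "k \<noteq> 0" using k True by (cases k) auto
  then obtain k' where k': "k = Suc k'" by (cases k) auto
  have "BS f k' (T x) \<le> MX f n (T x)" using MX_ge k k' by auto
  then show ?thesis using True k k' BS_Suc by (simp add: indicator_def)
next
  case False
  then have "MX f n x = 0" using MX_nonneg[of f n x] by auto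
  then show ?thesis using MX_nonneg[of f n "T x"] False by (simp add: indicator_def)
qed

lemma maximal_ineq:
  assumes f: "integrable N f"
  shows "integral\<^sup>L N (\<lambda>x. indicator {x \<in> space N. MX f n x > 0} x * f x) \<ge> 0"
proof -
  have fm[measurable]: "f \<in> borel_measurable N" using f by auto
  have S: "{x \<in> space N. MX f n x > 0} \<in> sets N" using MX_meas[OF fm] by measurable
  have i1: "integrable N (\<lambda>x. indicator {x \<in> space N. MX f n x > 0} x * f x)"
    using integrable_mult_indicator[OF S f] by simp
  have i2: "integrable N (\<lambda>x. MX f n x - MX f n (T x))"
    using MX_int[OF f] T_int[OF MX_int[OF f]] by auto
  have "integral\<^sup>L N (\<lambda>x. MX f n x - MX f n (T x)) = 0"
    using MX_int[OF f] T_int[OF MX_int[OF f]] by simp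
  moreover have "integral\<^sup>L N (\<lambda>x. MX f n x - MX f n (T x)) \<le> integral\<^sup>L N (\<lambda>x. indicator {x \<in> space N. MX f n x > 0} x * f x)"
  proof (intro integral_mono i1 i2)
    fix x assume "x \<in> space N"
    then show "MX f n x - MX f n (T x) \<le> indicator {x \<in> space N. MX f n x > 0} x * f x"
      using MX_point[of f n x] by (simp add: indicator_def)
  qed
  ultimately show ?thesis by simp
qed

definition Unb :: "('b \<Rightarrow> real) \<Rightarrow> 'b set" where
  "Unb g = {x \<in> space N. \<forall>C::nat. \<exists>n. BS g n x > real C}"

lemma Unb_sets: assumes gm: "g \<in> borel_measurable N" shows "Unb g \<in> sets N"
proof -
  have [measurable]: "BS g n \<in> borel_measurable N" for n using BS_meas[OF gm] .
  show ?thesis unfolding Unb_def by measurable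
qed

lemma cx: "real (nat \<lceil>\<bar>y::real\<bar>\<rceil>) \<ge> \<bar>y\<bar>"
proof -
  have "0 \<le> \<lceil>\<bar>y\<bar>\<rceil>" by simp
  then have "real (nat \<lceil>\<bar>y\<bar>\<rceil>) = of_int \<lceil>\<bar>y\<bar>\<rceil>" by (simp add: of_nat_nat)
  then show ?thesis using le_of_int_ceiling[of "\<bar>y\<bar>"] by linarith
qed

lemma Unb_inv:
  assumes "x \<in> space N"
  shows "T x \<in> Unb g \<longleftrightarrow> x \<in> Unb g"
proof
  assume a: "T x \<in> Unb g"
  show "x \<in> Unb g" unfolding Unb_def
  proof (intro CollectI conjI allI assms)
    fix C :: nat
    obtain n where n: "BS g n (T x) > real (C + nat \<lceil>\<bar>g x\<bar>\<rceil>)" using a unfolding Unb_def by blast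
    have e: "real (C + nat \<lceil>\<bar>g x\<bar>\<rceil>) = real C + real (nat \<lceil>\<bar>g x\<bar>\<rceil>)" by simp
    have "BS g (Suc n) x = g x + BS g n (T x)" by (rule BS_Suc)
    then have "BS g (Suc n) x > real C" using n e cx[of "g x"] by linarith
    then show "\<exists>n. BS g n x > real C" by blast
  qed
next
  assume a: "x \<in> Unb g"
  have Tx: "T x \<in> space N" using assms measurable_space[OF T_meas] by auto
  show "T x \<in> Unb g" unfolding Unb_def
  proof (intro CollectI conjI allI Tx)
    fix C :: nat
    obtain n where n: "BS g n x > real (C + nat \<lceil>\<bar>g x\<bar>\<rceil>)" using a unfolding Unb_def by blast
    have e: "real (C + nat \<lceil>\<bar>g x\<bar>\<rceil>) = real C + real (nat \<lceil>\<bar>g x\<bar>\<rceil>)" by simp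
    have "n \<noteq> 0"
    proof
      assume "n = 0"
      then have "BS g n x = 0" by simp
      then show False using n e cx[of "g x"] by linarith
    qed
    then obtain m where m: "n = Suc m" by (cases n) auto
    have "BS g n x = g x + BS g m (T x)" unfolding m by (rule BS_Suc)
    then have "BS g m (T x) > real C" using n e cx[of "g x"] by linarith
    then show "\<exists>n. BS g n (T x) > real C" by blast
  qed
qed

lemma Unb_full_imp:
  assumes g: "integrable N g" and full: "measure N (Unb g) = 1"
  shows "integral\<^sup>L N g \<ge> 0"
proof -
  have gm[measurable]: "g \<in> borel_measurable N" using g by auto
  define A where "A = {x \<in> space N. \<exists>n. MX g n x > 0}"
  define B where "B n = {x \<in> space N. MX g n x > 0}" for n
  have Asets: "A \<in> sets N" unfolding A_def using MX_meas[OF gm] by measurable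
  have Bsets: "B n \<in> sets N" for n unfolding B_def using MX_meas[OF gm] by measurable
  have AE: "AE x in N. x \<in> Unb g"
    using prob_eq_1[OF Unb_sets[OF gm]] full by blast
  have lim: "AE x in N. (\<lambda>n. indicator (B n) x * g x) \<longlonglongrightarrow> indicator A x * g x"
  proof (intro AE_I2)
    fix x
    show "(\<lambda>n. indicator (B n) x * g x) \<longlonglongrightarrow> indicator A x * g x"
    proof (cases "x \<in> A")
      case True
      then obtain n0 where n0: "MX g n0 x > 0" and xs: "x \<in> space N" unfolding A_def by auto
      have "\<forall>n\<ge>n0. MX g n x > 0" using MX_mono n0 by (meson less_le_trans)
      then have "\<forall>n\<ge>n0. indicator (B n) x * g x = indicator A x * g x"
        using True xs unfolding B_def by (auto simp: indicator_def)
      then show ?thesis by (intro tendsto_eventually) (auto simp: eventually_sequentially)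
    next
      case False
      then have "x \<notin> B n" for n unfolding A_def B_def by auto
      then show ?thesis using False by (simp add: indicator_def)
    qed
  qed
  have m1: "(\<lambda>x. indicator A x * g x) \<in> borel_measurable N"
    using Asets by (intro borel_measurable_times borel_measurable_indicator gm)
  have m2: "(\<lambda>x. indicator (B n) x * g x) \<in> borel_measurable N" for n
    using Bsets by (intro borel_measurable_times borel_measurable_indicator gm)
  have bd: "AE x in N. norm (indicator (B n) x * g x) \<le> norm (g x)" for n
    by (intro AE_I2) (simp add: indicator_def)
  have conv: "(\<lambda>n. integral\<^sup>L N (\<lambda>x. indicator (B n) x * g x)) \<longlonglongrightarrow> integral\<^sup>L N (\<lambda>x. indicator A x * g x)"
    by (rule integral_dominated_convergence[where w="\<lambda>x. norm (g x)", OF m1 m2 _ lim bd]) (use g in auto)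
  have "integral\<^sup>L N (\<lambda>x. indicator A x * g x) \<ge> 0"
    by (rule LIMSEQ_le_const[OF conv]) (use maximal_ineq[OF g] in \<open>auto simp: B_def\<close>)
  moreover have "integral\<^sup>L N (\<lambda>x. indicator A x * g x) = integral\<^sup>L N g"
  proof (rule integral_cong_AE[OF m1 gm])
    show "AE x in N. indicator A x * g x = g x"
    proof (rule AE_mp[OF AE], intro AE_I2 impI)
      fix x assume x: "x \<in> Unb g"
      then have "\<forall>C::nat. \<exists>n. BS g n x > real C" unfolding Unb_def by blast
      then obtain n where "BS g n x > real (0::nat)" by blast
      then have "MX g n x > 0" using MX_ge[of n n g x] by auto
      then show "indicator A x * g x = g x" using x unfolding A_def Unb_def by (auto simp: indicator_def)
    qed
  qed
  ultimately show ?thesis by simp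
qed

lemma ergodic_upper:
  assumes f: "integrable N f" and eta: "\<eta> > 0"
  shows "(\<lambda>n. measure N {x \<in> space N. BS f n x \<ge> real n * (integral\<^sup>L N f + \<eta>)}) \<longlonglongrightarrow> 0"
proof -
  have fm[measurable]: "f \<in> borel_measurable N" using f by auto
  define a where "a = integral\<^sup>L N f + \<eta> / 2"
  define g where "g = (\<lambda>x. f x - a)"
  have gi: "integrable N g" unfolding g_def using f by auto
  have gm[measurable]: "g \<in> borel_measurable N" unfolding g_def by auto
  have ig: "integral\<^sup>L N g < 0" unfolding g_def a_def using f eta by (simp add: prob_space)
  have Us: "Unb g \<subseteq> space N" by (auto simp: Unb_def)
  have inv: "T -` Unb g \<inter> space N = Unb g"
  proof (intro set_eqI)
    fix x show "x \<in> T -` Unb g \<inter> space N \<longleftrightarrow> x \<in> Unb g" using Unb_inv[of x g] Us by auto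
  qed
  have m0: "measure N (Unb g) = 0"
  proof -
    have "measure N (Unb g) \<noteq> 1" using Unb_full_imp[OF gi] ig by linarith
    then show ?thesis using T_erg[OF Unb_sets[OF gm] inv] by blast
  qed
  have BSg: "BS f n x = BS g n x + real n * a" for n x
    unfolding BS_def g_def by (simp add: sum_subtractf)
  define D where "D m = {x \<in> space N. \<exists>n\<ge>m. BS f n x \<ge> real n * (integral\<^sup>L N f + \<eta>)}" for m
  have "D m \<in> sets N" for m unfolding D_def using BS_meas[OF fm] by measurable
  then have Dsets: "range D \<subseteq> sets N" by auto
  have Ddec: "decseq D" unfolding decseq_def
  proof (intro allI impI subsetI)
    fix m n x assume mn: "m \<le> n" and x: "x \<in> D n"
    then obtain k where "k \<ge> n" "BS f k x \<ge> real k * (integral\<^sup>L N f + \<eta>)" "x \<in> space N" unfolding D_def by blast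
    then show "x \<in> D m" unfolding D_def using mn by (intro CollectI conjI exI[of _ k]) auto
  qed
  have Dsub: "(\<Inter>m. D m) \<subseteq> Unb g"
  proof
    fix x assume x: "x \<in> (\<Inter>m. D m)"
    then have xs: "x \<in> space N" unfolding D_def by auto
    show "x \<in> Unb g" unfolding Unb_def
    proof (intro CollectI conjI xs allI)
      fix C :: nat
      obtain n where n: "n \<ge> nat \<lceil>2 * (real C + 1) / \<eta>\<rceil>" "BS f n x \<ge> real n * (integral\<^sup>L N f + \<eta>)"
        using x unfolding D_def by blast
      have "real n \<ge> 2 * (real C + 1) / \<eta>" using n(1) by linarith
      then have "real n * \<eta> \<ge> 2 * (real C + 1)" using eta by (simp add: field_simps)
      then have "BS g n x > real C" using n(2) BSg[of n x] unfolding a_def by (simp add: algebra_simps)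
      then show "\<exists>n. BS g n x > real C" by blast
    qed
  qed
  have "measure N (\<Inter>m. D m) = 0"
    using finite_measure_mono[OF Dsub Unb_sets[OF gm]] m0 measure_nonneg[of N "\<Inter>m. D m"] by linarith
  then have DL: "(\<lambda>m. measure N (D m)) \<longlonglongrightarrow> 0"
    using finite_Lim_measure_decseq[OF Dsets Ddec] by simp
  show ?thesis
  proof (rule tendsto_sandwich[OF _ _ tendsto_const DL])
    show "\<forall>\<^sub>F n in sequentially. 0 \<le> measure N {x \<in> space N. BS f n x \<ge> real n * (integral\<^sup>L N f + \<eta>)}"
      by (intro always_eventually allI measure_nonneg)
    show "\<forall>\<^sub>F n in sequentially. measure N {x \<in> space N. BS f n x \<ge> real n * (integral\<^sup>L N f + \<eta>)} \<le> measure N (D n)"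
    proof (intro always_eventually allI finite_measure_mono)
      fix n
      show "D n \<in> sets N" using Dsets by auto
      show "{x \<in> space N. BS f n x \<ge> real n * (integral\<^sup>L N f + \<eta>)} \<subseteq> D n"
        unfolding D_def by blast
    qed
  qed
qed

end

definition Yp :: "(int \<times> nat \<Rightarrow> interval) \<Rightarrow> int \<Rightarrow> unit \<Rightarrow> interval" where
  "Yp f t w = f (t, 0)"
definition Xp :: "(int \<times> nat \<Rightarrow> interval) \<Rightarrow> nat \<Rightarrow> int \<Rightarrow> unit \<Rightarrow> interval" where
  "Xp f j t w = f (t, j)"
definition Zp :: "('p::finite \<Rightarrow> nat) \<Rightarrow> nat \<Rightarrow> nat \<Rightarrow> (int \<times> nat \<Rightarrow> interval) \<Rightarrow> interval ^ 'p" where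
  "Zp idx q J f = Zvec idx q J (Yp f) (Xp f) 0 ()"

lemma shift_pow: "(shift ^^ k) f = (\<lambda>(t, j). f (t + int k, j))"
proof (induction k arbitrary: f)
  case 0 then show ?case by simp
next
  case (Suc k)
  show ?case by (simp only: funpow_Suc_right comp_def Suc) (simp add: shift_def algebra_simps)
qed

lemma space_path: "space path_space = UNIV"
  unfolding path_space_def by (simp add: space_PiM PiE_def extensional_def)

lemma shift_meas[measurable]: "shift \<in> measurable path_space path_space"
proof -
  have "(\<lambda>f i. f (fst i + 1, snd i)) \<in> measurable path_space path_space"
    unfolding path_space_def
    by (rule measurable_PiM_single') (auto simp: space_PiM)
  moreover have "shift = (\<lambda>f i. f (fst i + 1, snd i))" unfolding shift_def by (auto simp: fun_eq_iff)
  ultimately show ?thesis by simp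
qed

lemma Zent_meas: "(\<lambda>f. Zent q J (Yp f) (Xp f) 0 k ()) \<in> borel_measurable path_space"
  unfolding Zent_def Yp_def Xp_def path_space_def by measurable

lemma Zp_meas[measurable]: "(\<lambda>f. Zp idx q J f $ i) \<in> borel_measurable path_space"
  unfolding Zp_def Zvec_def using Zent_meas by simp

locale acix =
  fixes M :: "'a measure" and K :: "real \<Rightarrow> real \<Rightarrow> real" and q J s p :: nat
    and idx :: "'p::finite \<Rightarrow> nat"
    and Y :: "int \<Rightarrow> 'a \<Rightarrow> interval" and X :: "nat \<Rightarrow> int \<Rightarrow> 'a \<Rightarrow> interval"
    and u :: "int \<Rightarrow> 'a \<Rightarrow> interval" and \<theta>0 :: "real ^ 'p"
  assumes prob: "prob_space M"
    and kernel: "spd_kernel K"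
    and p_def: "p = 2 + q + J * (s + 1)"
    and idx: "bij_betw idx UNIV {..<p}"
    and Y_rv[measurable]: "\<And>t. Y t \<in> borel_measurable M"
    and X_rv: "\<And>j t. 1 \<le> j \<Longrightarrow> j \<le> J \<Longrightarrow> X j t \<in> borel_measurable M"
    and model: "\<And>t \<omega>. \<omega> \<in> space M \<Longrightarrow> Y t \<omega> = lincomb (Zvec idx q J Y X t \<omega>) \<theta>0 + u t \<omega>"
    and stat: "strictly_stationary M (joint_path J Y X)"
    and erg: "ergodic_proc M (joint_path J Y X)"
    and Y_mom: "\<And>t. integrable M (\<lambda>\<omega>. (normK K (Y t \<omega>)) ^ 4)"
    and X_mom: "\<And>j t. 1 \<le> j \<Longrightarrow> j \<le> J \<Longrightarrow> integrable M (\<lambda>\<omega>. (normK K (X j t \<omega>)) ^ 4)"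
    and u_mds: "\<And>t v. v \<in> dirs \<Longrightarrow>
       AE \<omega> in M. real_cond_exp M (info M J Y X (t - 1)) (\<lambda>\<omega>. supp (u t \<omega>) v) \<omega> = 0"
begin

sublocale prob_space M by (rule prob)

abbreviation "Z \<equiv> Zvec idx q J Y X"
abbreviation "W \<equiv> joint_path J Y X"

lemma idx_lt: "idx i < 2 + q + J * (s + 1)"
  using idx p_def unfolding bij_betw_def by auto

lemma Z_path: "Z (int k) \<omega> $ i = Zp idx q J ((shift ^^ k) (W \<omega>)) $ i"
proof -
  have lt: "idx i < 2 + q + J * (s + 1)" by (rule idx_lt)
  show ?thesis
  proof (cases "idx i < 2 + q")
    case True
    then show ?thesis unfolding Zp_def Zvec_def Zent_def Yp_def Xp_def shift_pow joint_path_def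
      by (simp add: algebra_simps)
  next
    case False
    then have Jp: "J > 0" using lt by (cases J) auto
    then have "(idx i - (2 + q)) mod J < J" by simp
    then have "(idx i - (2 + q)) mod J + 1 \<le> J" by linarith
    then show ?thesis using False unfolding Zp_def Zvec_def Zent_def Yp_def Xp_def shift_pow joint_path_def
      by (simp add: algebra_simps)
  qed
qed

lemma W_meas[measurable]: "W \<in> measurable M path_space"
proof -
  have "(\<lambda>\<omega> i. W \<omega> i) \<in> measurable M path_space"
    unfolding path_space_def
  proof (rule measurable_PiM_single')
    fix i :: "int \<times> nat"
    obtain t j where i: "i = (t, j)" by (cases i)
    have "(\<lambda>\<omega>. if j = 0 then Y t \<omega> else if j \<le> J then X j t \<omega> else (0, 0)) \<in> borel_measurable M"
    proof (cases "j = 0")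
      case True then show ?thesis by simp
    next
      case False
      then show ?thesis using X_rv[of j t] by (cases "j \<le> J") auto
    qed
    then show "(\<lambda>\<omega>. W \<omega> i) \<in> borel_measurable M" unfolding joint_path_def i by simp
  qed (auto simp: space_PiM)
  then show ?thesis by simp
qed

definition P where "P = distr M path_space W"

lemma P_prob: "prob_space P"
  unfolding P_def by (rule prob_space_distr) simp

lemma sets_P[simp]: "sets P = sets path_space" and space_P[simp]: "space P = space path_space"
  unfolding P_def by auto

lemma measurable_P: "measurable P N = measurable path_space N" "measurable N P = measurable N path_space"
  by (intro measurable_cong_sets; simp)+

lemma P_erg: "mp_erg P shift"
proof -
  interpret Pp: prob_space P by (rule P_prob)
  show ?thesis
  proof
    show "shift \<in> measurable P P" unfolding measurable_P by simp
    have "distr P P shift = distr P path_space shift" by (rule distr_cong) auto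
    also have "\<dots> = distr M path_space (shift \<circ> W)" unfolding P_def by (rule distr_distr) auto
    also have "\<dots> = distr M path_space (\<lambda>\<omega>. shift (W \<omega>))" by (simp add: comp_def)
    also have "\<dots> = P" using stat unfolding strictly_stationary_def P_def by simp
    finally show "distr P P shift = P" .
    fix A assume A: "A \<in> sets P" "shift -` A \<inter> space P = A"
    have "measure P A = measure M (W -` A \<inter> space M)" unfolding P_def using A by (intro measure_distr) auto
    moreover have "measure M (W -` A \<inter> space M) \<in> {0, 1}"
      using erg A unfolding ergodic_proc_def by auto
    ultimately show "measure P A = 0 \<or> measure P A = 1" by auto
  qed
qed

end

definition L4 :: "'a measure \<Rightarrow> ('a \<Rightarrow> real) \<Rightarrow> bool" where
  "L4 M f \<longleftrightarrow> f \<in> borel_measurable M \<and> integrable M (\<lambda>x. (f x) ^ 4)"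

lemma two_abs: "2 * \<bar>x * y\<bar> \<le> x\<^sup>2 + (y::real)\<^sup>2"
proof -
  have "0 \<le> (\<bar>x\<bar> - \<bar>y\<bar>)\<^sup>2" by simp
  then show ?thesis by (simp add: power2_eq_square algebra_simps abs_mult)
qed

lemma abs_mult_le_sq: "\<bar>x * y\<bar> \<le> x\<^sup>2 + (y::real)\<^sup>2"
  using two_abs[of x y] by simp

lemma sq_sum_sq: "(a\<^sup>2 + b\<^sup>2)\<^sup>2 \<le> 2 * (a ^ 4 + (b::real) ^ 4)"
proof -
  have e: "(a\<^sup>2 + b\<^sup>2)\<^sup>2 = (a\<^sup>2)\<^sup>2 + 2 * (a\<^sup>2 * b\<^sup>2) + (b\<^sup>2)\<^sup>2" by (simp add: power2_eq_square algebra_simps)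
  have f: "(a\<^sup>2)\<^sup>2 = a ^ 4" "(b\<^sup>2)\<^sup>2 = b ^ 4" by (simp_all add: power2_eq_square power4_eq_xxxx)
  have "a\<^sup>2 * b\<^sup>2 \<le> \<bar>a\<^sup>2 * b\<^sup>2\<bar>" by simp
  then show ?thesis using two_abs[of "a\<^sup>2" "b\<^sup>2"] e f by (smt (verit))
qed

lemma four_prod_bound: "\<bar>a * b * c * (d::real)\<bar> \<le> 2 * (a ^ 4 + b ^ 4 + c ^ 4 + d ^ 4)"
proof -
  have 1: "\<bar>a * b\<bar> \<le> a\<^sup>2 + b\<^sup>2" "\<bar>c * d\<bar> \<le> c\<^sup>2 + d\<^sup>2" by (rule abs_mult_le_sq)+
  have "\<bar>a * b * c * d\<bar> = \<bar>a * b\<bar> * \<bar>c * d\<bar>" by (simp add: abs_mult)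
  also have "\<dots> \<le> (a\<^sup>2 + b\<^sup>2) * (c\<^sup>2 + d\<^sup>2)" using 1 by (intro mult_mono) auto
  also have "\<dots> \<le> (a\<^sup>2 + b\<^sup>2)\<^sup>2 + (c\<^sup>2 + d\<^sup>2)\<^sup>2"
    using abs_mult_le_sq[of "a\<^sup>2 + b\<^sup>2" "c\<^sup>2 + d\<^sup>2"] by simp
  finally show ?thesis using sq_sum_sq[of a b] sq_sum_sq[of c d] by (smt (verit))
qed

lemma sum4_bound: "(a + (b::real)) ^ 4 \<le> 8 * (a ^ 4 + b ^ 4)"
proof -
  have "(a + b)\<^sup>2 \<le> 2 * (a\<^sup>2 + b\<^sup>2)"
  proof -
    have "(a + b)\<^sup>2 = a\<^sup>2 + 2 * (a * b) + b\<^sup>2" by (simp add: power2_eq_square algebra_simps)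
    moreover have "a * b \<le> \<bar>a * b\<bar>" by simp
    ultimately show ?thesis using two_abs[of a b] by (smt (verit))
  qed
  then have "((a + b)\<^sup>2)\<^sup>2 \<le> (2 * (a\<^sup>2 + b\<^sup>2))\<^sup>2" by (intro power_mono) auto
  also have "\<dots> = 4 * (a\<^sup>2 + b\<^sup>2)\<^sup>2" by (simp add: power2_eq_square algebra_simps)
  finally have "((a + b)\<^sup>2)\<^sup>2 \<le> 4 * (a\<^sup>2 + b\<^sup>2)\<^sup>2" .
  moreover have "((a + b)\<^sup>2)\<^sup>2 = (a + b) ^ 4" by (simp add: power2_eq_square power4_eq_xxxx)
  ultimately show ?thesis using sq_sum_sq[of a b] by (smt (verit))
qed

context prob_space
begin

lemma L4_const[simp, intro]: "L4 M (\<lambda>_. c)"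
  unfolding L4_def by auto

lemma L4_meas: "L4 M f \<Longrightarrow> f \<in> borel_measurable M" unfolding L4_def by auto

lemma L4_add[intro]: assumes "L4 M f" "L4 M g" shows "L4 M (\<lambda>x. f x + g x)"
proof -
  have [measurable]: "f \<in> borel_measurable M" "g \<in> borel_measurable M" using assms unfolding L4_def by auto
  have i: "integrable M (\<lambda>x. 8 * ((f x) ^ 4 + (g x) ^ 4))" using assms unfolding L4_def by auto
  have ae: "AE x in M. norm ((f x + g x) ^ 4) \<le> norm (8 * ((f x) ^ 4 + (g x) ^ 4))"
    using sum4_bound by (intro AE_I2) (simp add: zero_le_even_power)
  have m: "(\<lambda>x. (f x + g x) ^ 4) \<in> borel_measurable M" by measurable
  have "integrable M (\<lambda>x. (f x + g x) ^ 4)" by (rule Bochner_Integration.integrable_bound[OF i m ae])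
  then show ?thesis unfolding L4_def by simp
qed

lemma L4_cmult[intro]: assumes "L4 M f" shows "L4 M (\<lambda>x. c * f x)"
  using assms unfolding L4_def by (auto simp: power_mult_distrib)

lemma L4_uminus[intro]: assumes "L4 M f" shows "L4 M (\<lambda>x. - f x)"
  using L4_cmult[OF assms, of "-1"] by simp

lemma L4_diff[intro]: assumes "L4 M f" "L4 M g" shows "L4 M (\<lambda>x. f x - g x)"
  using L4_add[OF assms(1) L4_uminus[OF assms(2)]] by simp

lemma L4_abs[intro]: assumes "L4 M f" shows "L4 M (\<lambda>x. \<bar>f x\<bar>)"
proof -
  have "(\<bar>y\<bar>) ^ 4 = y ^ 4" for y :: real by (simp add: power4_eq_xxxx abs_mult[symmetric])
  then show ?thesis using assms unfolding L4_def by auto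
qed

lemma L4_sum[intro]: assumes "\<And>i. i \<in> S \<Longrightarrow> L4 M (f i)" shows "L4 M (\<lambda>x. \<Sum>i\<in>S. f i x)"
  using assms
proof (induction S rule: infinite_finite_induct)
  case (insert i S) then show ?case by (simp add: L4_add)
qed auto

lemma L4_cong: assumes "L4 M f" "\<And>x. x \<in> space M \<Longrightarrow> f x = g x" shows "L4 M g"
proof -
  have "g \<in> borel_measurable M" using assms unfolding L4_def using measurable_cong by blast
  moreover have "integrable M (\<lambda>x. (g x) ^ 4)"
    using assms unfolding L4_def by (subst Bochner_Integration.integrable_cong[of M M _ "\<lambda>x. (f x) ^ 4"]) auto
  ultimately show ?thesis unfolding L4_def by auto
qed

lemma int4:
  assumes "L4 M a" "L4 M b" "L4 M c" "L4 M d" "g \<in> borel_measurable M"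
    and bd: "\<And>x. x \<in> space M \<Longrightarrow> \<bar>g x\<bar> \<le> C * \<bar>a x * b x * c x * d x\<bar>"
  shows "integrable M g"
proof -
  have i: "integrable M (\<lambda>x. \<bar>C\<bar> * (2 * ((a x) ^ 4 + (b x) ^ 4 + (c x) ^ 4 + (d x) ^ 4)))"
    using assms unfolding L4_def by auto
  have ae: "AE x in M. norm (g x) \<le> norm (\<bar>C\<bar> * (2 * ((a x) ^ 4 + (b x) ^ 4 + (c x) ^ 4 + (d x) ^ 4)))"
  proof (intro AE_I2)
    fix x assume x: "x \<in> space M"
    have "\<bar>g x\<bar> \<le> C * \<bar>a x * b x * c x * d x\<bar>" by (rule bd[OF x])
    also have "\<dots> \<le> \<bar>C\<bar> * \<bar>a x * b x * c x * d x\<bar>" by (simp add: mult_right_mono)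
    also have "\<dots> \<le> \<bar>C\<bar> * (2 * ((a x) ^ 4 + (b x) ^ 4 + (c x) ^ 4 + (d x) ^ 4))"
      by (intro mult_left_mono four_prod_bound) auto
    finally show "norm (g x) \<le> norm (\<bar>C\<bar> * (2 * ((a x) ^ 4 + (b x) ^ 4 + (c x) ^ 4 + (d x) ^ 4)))"
      by (simp add: zero_le_even_power)
  qed
  show ?thesis by (rule Bochner_Integration.integrable_bound[OF i assms(5) ae])
qed

end

lemma fst_meas: fixes f :: "'a \<Rightarrow> interval" shows "f \<in> borel_measurable M \<Longrightarrow> (\<lambda>x. fst (f x)) \<in> borel_measurable M"
proof -
  assume "f \<in> borel_measurable M"
  then have "f \<in> measurable M (borel \<Otimes>\<^sub>M borel)" by (simp add: borel_prod)
  then show ?thesis by (rule measurable_fst')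
qed
lemma snd_meas: fixes f :: "'a \<Rightarrow> interval" shows "f \<in> borel_measurable M \<Longrightarrow> (\<lambda>x. snd (f x)) \<in> borel_measurable M"
proof -
  assume "f \<in> borel_measurable M"
  then have "f \<in> measurable M (borel \<Otimes>\<^sub>M borel)" by (simp add: borel_prod)
  then show ?thesis by (rule measurable_snd')
qed

definition kap :: "(real \<Rightarrow> real \<Rightarrow> real) \<Rightarrow> real" where
  "kap K = \<bar>K 1 1\<bar> + \<bar>K 1 (-1)\<bar> + \<bar>K (-1) 1\<bar> + \<bar>K (-1) (-1)\<bar>"

definition nrm :: "interval \<Rightarrow> real" where
  "nrm A = \<bar>fst A\<bar> + \<bar>snd A\<bar>"

lemma nrm_ge: "\<bar>fst A\<bar> \<le> nrm A" "\<bar>snd A\<bar> \<le> nrm A" "nrm A \<ge> 0"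
  unfolding nrm_def by auto

lemma ipK_bound: "\<bar>ipK K A B\<bar> \<le> kap K * nrm A * nrm B"
proof -
  have t: "\<bar>k * x * y\<bar> \<le> \<bar>k\<bar> * (nrm A * nrm B)" if "\<bar>x\<bar> \<le> nrm A" "\<bar>y\<bar> \<le> nrm B" for k x y
  proof -
    have "\<bar>x * y\<bar> \<le> nrm A * nrm B" unfolding abs_mult using that by (intro mult_mono) (auto simp: nrm_ge)
    then show ?thesis by (simp add: abs_mult mult_left_mono mult.assoc)
  qed
  have 1: "\<bar>K 1 1 * snd A * snd B\<bar> \<le> \<bar>K 1 1\<bar> * (nrm A * nrm B)" by (rule t) (auto simp: nrm_ge)
  have 2: "\<bar>K 1 (-1) * snd A * fst B\<bar> \<le> \<bar>K 1 (-1)\<bar> * (nrm A * nrm B)" by (rule t) (auto simp: nrm_ge)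
  have 3: "\<bar>K (-1) 1 * fst A * snd B\<bar> \<le> \<bar>K (-1) 1\<bar> * (nrm A * nrm B)" by (rule t) (auto simp: nrm_ge)
  have 4: "\<bar>K (-1) (-1) * fst A * fst B\<bar> \<le> \<bar>K (-1) (-1)\<bar> * (nrm A * nrm B)" by (rule t) (auto simp: nrm_ge)
  have "kap K * nrm A * nrm B = \<bar>K 1 1\<bar> * (nrm A * nrm B) + \<bar>K 1 (-1)\<bar> * (nrm A * nrm B)
     + \<bar>K (-1) 1\<bar> * (nrm A * nrm B) + \<bar>K (-1) (-1)\<bar> * (nrm A * nrm B)"
    unfolding kap_def by (simp add: algebra_simps)
  have abs4: "\<bar>a - b - c + d\<bar> \<le> \<bar>a\<bar> + \<bar>b\<bar> + \<bar>c\<bar> + \<bar>d\<bar>" for a b c d :: real by linarith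
  have "\<bar>ipK K A B\<bar> \<le> \<bar>K 1 1 * snd A * snd B\<bar> + \<bar>K 1 (-1) * snd A * fst B\<bar> + \<bar>K (-1) 1 * fst A * snd B\<bar> + \<bar>K (-1) (-1) * fst A * fst B\<bar>"
    unfolding ipK_expl by (rule abs4)
  also have "\<dots> \<le> \<bar>K 1 1\<bar> * (nrm A * nrm B) + \<bar>K 1 (-1)\<bar> * (nrm A * nrm B)
     + \<bar>K (-1) 1\<bar> * (nrm A * nrm B) + \<bar>K (-1) (-1)\<bar> * (nrm A * nrm B)"
    by (intro add_mono 1 2 3 4)
  finally show ?thesis using \<open>kap K * nrm A * nrm B = _\<close> by simp
qed

context acix
begin

definition L4I :: "('a \<Rightarrow> interval) \<Rightarrow> bool" where
  "L4I f \<longleftrightarrow> L4 M (\<lambda>x. fst (f x)) \<and> L4 M (\<lambda>x. snd (f x))"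

lemma L4I_meas: assumes "L4I f" shows "(\<lambda>x. fst (f x)) \<in> borel_measurable M" "(\<lambda>x. snd (f x)) \<in> borel_measurable M"
  using assms unfolding L4I_def L4_def by auto

lemma L4I_nrm: "L4I f \<Longrightarrow> L4 M (\<lambda>x. nrm (f x))"
  unfolding L4I_def nrm_def by auto

lemma L4I_const[simp, intro]: "L4I (\<lambda>_. c)" unfolding L4I_def by auto

lemma L4I_normK:
  assumes fm[measurable]: "f \<in> borel_measurable M" and fi: "integrable M (\<lambda>\<omega>. (normK K (f \<omega>)) ^ 4)"
  shows "L4I f"
proof -
  have kc: "kc K > 0" using kc_pos[OF kernel] by simp
  have b: "(c x) ^ 4 \<le> (normK K (f x)) ^ 4 / (kc K)\<^sup>2" if c: "c x = fst (f x) \<or> c x = snd (f x)" for c :: "'a \<Rightarrow> real" and x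
  proof -
    have "kc K * (c x)\<^sup>2 \<le> kc K * ((fst (f x))\<^sup>2 + (snd (f x))\<^sup>2)" using c kc by (intro mult_left_mono) auto
    also have "\<dots> \<le> (normK K (f x))\<^sup>2" using ipK_lb[OF kernel, of "f x"] normK_sq[OF kernel, of "f x"] by simp
    finally have "(c x)\<^sup>2 \<le> (normK K (f x))\<^sup>2 / kc K" using kc by (simp add: field_simps)
    then have "((c x)\<^sup>2)\<^sup>2 \<le> ((normK K (f x))\<^sup>2 / kc K)\<^sup>2" by (intro power_mono) auto
    then show ?thesis by (simp add: power2_eq_square power4_eq_xxxx field_simps)
  qed
  have i: "integrable M (\<lambda>x. (normK K (f x)) ^ 4 / (kc K)\<^sup>2)" using fi by auto
  have L: "L4 M c" if c: "\<And>x. c x = fst (f x) \<or> c x = snd (f x)" and cm: "c \<in> borel_measurable M" for c :: "'a \<Rightarrow> real"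
  proof -
    have ae: "AE x in M. norm ((c x) ^ 4) \<le> norm ((normK K (f x)) ^ 4 / (kc K)\<^sup>2)"
    proof (intro AE_I2)
      fix x show "norm ((c x) ^ 4) \<le> norm ((normK K (f x)) ^ 4 / (kc K)\<^sup>2)"
        using b[of c x, OF c[of x]] by (simp add: zero_le_even_power)
    qed
    have m: "(\<lambda>x. (c x) ^ 4) \<in> borel_measurable M" using cm by measurable
    show ?thesis unfolding L4_def using Bochner_Integration.integrable_bound[OF i m ae] cm by simp
  qed
  show ?thesis unfolding L4I_def by (intro conjI L) (auto intro: fst_meas snd_meas fm)
qed

lemma L4I_Y: "L4I (Y t)" by (rule L4I_normK[OF Y_rv Y_mom])

lemma L4I_X: "1 \<le> j \<Longrightarrow> j \<le> J \<Longrightarrow> L4I (X j t)"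
  using L4I_normK[OF X_rv X_mom] by simp

lemma L4I_Z: "L4I (\<lambda>\<omega>. Z t \<omega> $ i)"
proof -
  have lt: "idx i < 2 + q + J * (s + 1)" by (rule idx_lt)
  consider "idx i = 0" | "idx i = 1" | "idx i \<noteq> 0" "idx i \<noteq> 1" "idx i < 2 + q" | "\<not> idx i < 2 + q" by linarith
  then show ?thesis
  proof cases
    case 4
    then have Jp: "J > 0" using lt by (cases J) auto
    then have "(idx i - (2 + q)) mod J < J" by simp
    then have "(idx i - (2 + q)) mod J + 1 \<le> J" by linarith
    then show ?thesis using 4 L4I_X unfolding Zvec_def Zent_def by simp
  qed (auto simp: Zvec_def Zent_def L4I_Y)
qed

lemma L4I_lincomb:
  assumes "\<And>i. L4I (\<lambda>\<omega>. A \<omega> $ i)"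
  shows "L4I (\<lambda>\<omega>. lincomb (A \<omega>) \<theta>)"
proof -
  have "L4 M (\<lambda>\<omega>. \<Sum>i\<in>UNIV. \<theta> $ i * fst (A \<omega> $ i))"
    by (intro L4_sum L4_cmult) (use assms in \<open>auto simp: L4I_def\<close>)
  moreover have "L4 M (\<lambda>\<omega>. \<Sum>i\<in>UNIV. \<theta> $ i * snd (A \<omega> $ i))"
    by (intro L4_sum L4_cmult) (use assms in \<open>auto simp: L4I_def\<close>)
  ultimately show ?thesis unfolding L4I_def lincomb_def fst_sum' snd_sum' by simp
qed

lemma L4I_diff: "L4I f \<Longrightarrow> L4I g \<Longrightarrow> L4I (\<lambda>x. f x - g x)"
  unfolding L4I_def by auto

lemma L4I_cong: "L4I f \<Longrightarrow> (\<And>x. x \<in> space M \<Longrightarrow> f x = g x) \<Longrightarrow> L4I g"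
  unfolding L4I_def using L4_cong by metis

lemma u_eq: "\<omega> \<in> space M \<Longrightarrow> u t \<omega> = Y t \<omega> - lincomb (Z t \<omega>) \<theta>0"
  using model[of \<omega> t] by simp

lemma L4I_u: "L4I (u t)"
proof -
  have "L4I (\<lambda>\<omega>. Y t \<omega> - lincomb (Z t \<omega>) \<theta>0)"
    by (intro L4I_diff L4I_Y L4I_lincomb L4I_Z)
  then show ?thesis by (rule L4I_cong) (simp add: u_eq)
qed

lemma ipK_meas: "L4I f \<Longrightarrow> L4I g \<Longrightarrow> (\<lambda>x. ipK K (f x) (g x)) \<in> borel_measurable M"
  unfolding ipK_expl using L4I_meas by measurable

lemma int_ipK_ab:
  assumes "L4I f" "L4I g" "L4 M a" "L4 M b"
  shows "integrable M (\<lambda>x. ipK K (f x) (g x) * a x * b x)"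
proof (rule int4[OF L4I_nrm[OF assms(1)] L4I_nrm[OF assms(2)] assms(3,4)])
  show "(\<lambda>x. ipK K (f x) (g x) * a x * b x) \<in> borel_measurable M"
    using ipK_meas[OF assms(1,2)] L4_meas[OF assms(3)] L4_meas[OF assms(4)] by measurable
  fix x
  have "\<bar>ipK K (f x) (g x) * a x * b x\<bar> = \<bar>ipK K (f x) (g x)\<bar> * \<bar>a x * b x\<bar>" by (simp add: abs_mult)
  also have "\<dots> \<le> (kap K * nrm (f x) * nrm (g x)) * \<bar>a x * b x\<bar>" by (intro mult_right_mono ipK_bound) auto
  also have "\<dots> = kap K * \<bar>nrm (f x) * nrm (g x) * a x * b x\<bar>" using nrm_ge(3) by (simp add: abs_mult algebra_simps)
  finally show "\<bar>ipK K (f x) (g x) * a x * b x\<bar> \<le> kap K * \<bar>nrm (f x) * nrm (g x) * a x * b x\<bar>" .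
qed

lemma int_ipK:
  assumes "L4I f" "L4I g"
  shows "integrable M (\<lambda>x. ipK K (f x) (g x))"
  using int_ipK_ab[OF assms L4_const L4_const, of 1 1] by simp

lemma int_ipK2:
  assumes "L4I f" "L4I g" "L4I h" "L4I k"
  shows "integrable M (\<lambda>x. ipK K (f x) (g x) * ipK K (h x) (k x))"
proof (rule int4[OF L4I_nrm[OF assms(1)] L4I_nrm[OF assms(2)] L4I_nrm[OF assms(3)] L4I_nrm[OF assms(4)]])
  show "(\<lambda>x. ipK K (f x) (g x) * ipK K (h x) (k x)) \<in> borel_measurable M"
    using ipK_meas[OF assms(1,2)] ipK_meas[OF assms(3,4)] by measurable
  fix x
  have "\<bar>ipK K (f x) (g x) * ipK K (h x) (k x)\<bar> \<le> (kap K * nrm (f x) * nrm (g x)) * (kap K * nrm (h x) * nrm (k x))"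
    unfolding abs_mult by (intro mult_mono ipK_bound) (auto simp: kap_def nrm_ge)
  also have "\<dots> = (kap K)\<^sup>2 * \<bar>nrm (f x) * nrm (g x) * nrm (h x) * nrm (k x)\<bar>"
    using nrm_ge(3) by (simp add: abs_mult power2_eq_square algebra_simps)
  finally show "\<bar>ipK K (f x) (g x) * ipK K (h x) (k x)\<bar> \<le> (kap K)\<^sup>2 * \<bar>nrm (f x) * nrm (g x) * nrm (h x) * nrm (k x)\<bar>" .
qed

end

lemma (in mp_erg) distr_pow: "distr N N (T ^^ k) = N"
proof (induction k)
  case 0 then show ?case by (simp add: distr_id2)
next
  case (Suc k)
  have "distr N N (T ^^ Suc k) = distr N N (T ^^ k \<circ> T)" by (simp add: funpow_Suc_right del: funpow.simps)
  also have "\<dots> = distr (distr N N T) N (T ^^ k)" by (rule distr_distr[symmetric]) auto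
  also have "\<dots> = N" using T_pres Suc by simp
  finally show ?case .
qed

context acix
begin

definition Gen :: "int \<Rightarrow> 'a set set" where
  "Gen t = {Y s -` B \<inter> space M | s B. s \<le> t \<and> B \<in> sets (borel :: interval measure)} \<union>
      {X j s -` B \<inter> space M | j s B. 1 \<le> j \<and> j \<le> J \<and> s \<le> t + 1 \<and> B \<in> sets (borel :: interval measure)}"

lemma info_eq: "info M J Y X t = sigma (space M) (Gen t)"
  unfolding info_def Gen_def ..

lemma Gen_Pow: "Gen t \<subseteq> Pow (space M)" unfolding Gen_def by auto

lemma space_info[simp]: "space (info M J Y X t) = space M"
  unfolding info_eq by (rule space_measure_of[OF Gen_Pow])

lemma sets_info: "sets (info M J Y X t) = sigma_sets (space M) (Gen t)"
  unfolding info_eq by (rule sets_measure_of[OF Gen_Pow])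

lemma Gen_sets: "Gen t \<subseteq> sets M"
proof
  fix A assume "A \<in> Gen t"
  then consider (y) s B where "A = Y s -` B \<inter> space M" "B \<in> sets borel"
    | (x) j s B where "A = X j s -` B \<inter> space M" "1 \<le> j" "j \<le> J" "B \<in> sets borel"
    unfolding Gen_def by blast
  then show "A \<in> sets M"
  proof cases
    case y then show ?thesis using measurable_sets[OF Y_rv] by auto
  next
    case x then show ?thesis using measurable_sets[OF X_rv] by auto
  qed
qed

lemma info_subalg: "subalgebra M (info M J Y X t)"
  unfolding subalgebra_def sets_info
  using sets.sigma_sets_subset[OF Gen_sets] by auto

lemma Y_info: "r \<le> t \<Longrightarrow> Y r \<in> borel_measurable (info M J Y X t)"
  by (rule measurableI) (auto simp: sets_info Gen_def intro!: sigma_sets.Basic)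

lemma X_info: "1 \<le> j \<Longrightarrow> j \<le> J \<Longrightarrow> r \<le> t + 1 \<Longrightarrow> X j r \<in> borel_measurable (info M J Y X t)"
  by (rule measurableI) (auto simp: sets_info Gen_def intro!: sigma_sets.Basic)

lemma Z_info: "r \<le> t + 1 \<Longrightarrow> (\<lambda>\<omega>. Z r \<omega> $ i) \<in> borel_measurable (info M J Y X t)"
proof -
  assume rt: "r \<le> t + 1"
  have lt: "idx i < 2 + q + J * (s + 1)" by (rule idx_lt)
  consider "idx i = 0" | "idx i = 1" | "idx i \<noteq> 0" "idx i \<noteq> 1" "idx i < 2 + q" | "\<not> idx i < 2 + q" by linarith
  then show ?thesis
  proof cases
    case 3
    then have "r - int (idx i - 1) \<le> t" using rt by linarith
    then show ?thesis using 3 Y_info unfolding Zvec_def Zent_def by simp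
  next
    case 4
    then have Jp: "J > 0" using lt by (cases J) auto
    then have "(idx i - (2 + q)) mod J < J" by simp
    then have "(idx i - (2 + q)) mod J + 1 \<le> J" by linarith
    moreover have "r - int ((idx i - (2 + q)) div J) \<le> t + 1" using rt by linarith
    ultimately show ?thesis using 4 X_info unfolding Zvec_def Zent_def by simp
  qed (auto simp: Zvec_def Zent_def)
qed

lemma lincomb_meas:
  assumes "\<And>i. (\<lambda>\<omega>. A \<omega> $ i) \<in> borel_measurable N"
  shows "(\<lambda>\<omega>. lincomb (A \<omega>) \<theta>) \<in> borel_measurable N"
  unfolding lincomb_def using assms by measurable

lemma u_info: "r \<le> t \<Longrightarrow> u r \<in> borel_measurable (info M J Y X t)"
proof -
  assume rt: "r \<le> t"
  have "(\<lambda>\<omega>. Y r \<omega> - lincomb (Z r \<omega>) \<theta>0) \<in> borel_measurable (info M J Y X t)"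
  proof -
    have zi: "(\<lambda>\<omega>. Z r \<omega> $ i) \<in> borel_measurable (info M J Y X t)" for i using Z_info rt by simp
    show ?thesis using Y_info[OF rt] lincomb_meas[OF zi] by measurable
  qed
  then show ?thesis by (rule measurable_cong[THEN iffD1, rotated]) (simp add: u_eq)
qed

lemma fin_subalg: "finite_measure_subalgebra M (info M J Y X t)"
  by (intro finite_measure_subalgebra.intro finite_measure_subalgebra_axioms.intro info_subalg)
     (rule finite_measure_axioms)

lemma mds_zero:
  assumes hF: "h \<in> borel_measurable (info M J Y X (t - 1))"
    and i1: "integrable M (\<lambda>x. h x * fst (u t x))" and i2: "integrable M (\<lambda>x. h x * snd (u t x))"
  shows "integral\<^sup>L M (\<lambda>x. h x * fst (u t x)) = 0" "integral\<^sup>L M (\<lambda>x. h x * snd (u t x)) = 0"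
proof -
  interpret F: finite_measure_subalgebra M "info M J Y X (t - 1)" by (rule fin_subalg)
  have um: "(\<lambda>x. fst (u t x)) \<in> borel_measurable M" "(\<lambda>x. snd (u t x)) \<in> borel_measurable M"
    using L4I_meas[OF L4I_u] by auto
  have d1: "(1::real) \<in> dirs" and d2: "(-1::real) \<in> dirs" unfolding dirs_def by auto
  have s1: "(\<lambda>\<omega>. supp (u t \<omega>) 1) = (\<lambda>\<omega>. snd (u t \<omega>))" by (simp add: supp_def)
  have s2: "(\<lambda>\<omega>. supp (u t \<omega>) (-1)) = (\<lambda>\<omega>. - fst (u t \<omega>))" by (simp add: supp_def)
  have ae1: "AE \<omega> in M. real_cond_exp M (info M J Y X (t - 1)) (\<lambda>\<omega>. snd (u t \<omega>)) \<omega> = 0"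
    using u_mds[OF d1, of t] unfolding s1 .
  have ae2: "AE \<omega> in M. real_cond_exp M (info M J Y X (t - 1)) (\<lambda>\<omega>. - fst (u t \<omega>)) \<omega> = 0"
    using u_mds[OF d2, of t] unfolding s2 .
  have "integral\<^sup>L M (\<lambda>x. h x * snd (u t x)) = integral\<^sup>L M (\<lambda>x. h x * real_cond_exp M (info M J Y X (t - 1)) (\<lambda>\<omega>. snd (u t \<omega>)) x)"
    by (rule F.real_cond_exp_intg(2)[symmetric]) (use i2 hF um in auto)
  also have "\<dots> = 0" by (rule integral_eq_zero_AE) (use ae1 in auto)
  finally show "integral\<^sup>L M (\<lambda>x. h x * snd (u t x)) = 0" .
  have i1': "integrable M (\<lambda>x. h x * - fst (u t x))" using i1 by simp
  have mf: "(\<lambda>x. - fst (u t x)) \<in> borel_measurable M" using um by measurable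
  have "integral\<^sup>L M (\<lambda>x. h x * - fst (u t x)) = integral\<^sup>L M (\<lambda>x. h x * real_cond_exp M (info M J Y X (t - 1)) (\<lambda>\<omega>. - fst (u t \<omega>)) x)"
    by (rule F.real_cond_exp_intg(2)[symmetric]) (use i1' hF mf in auto)
  also have "\<dots> = 0" by (rule integral_eq_zero_AE) (use ae2 in auto)
  finally show "integral\<^sup>L M (\<lambda>x. h x * fst (u t x)) = 0" by simp
qed

definition xi :: "'p \<Rightarrow> int \<Rightarrow> 'a \<Rightarrow> real" where
  "xi i t \<omega> = ipK K (Z t \<omega> $ i) (u t \<omega>)"

lemma xi_meas: "xi i t \<in> borel_measurable M"
  unfolding xi_def by (rule ipK_meas[OF L4I_Z L4I_u])

lemma xi_info: "r \<le> t \<Longrightarrow> xi i r \<in> borel_measurable (info M J Y X t)"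
proof -
  assume rt: "r \<le> t"
  have a: "(\<lambda>\<omega>. Z r \<omega> $ i) \<in> borel_measurable (info M J Y X t)" using Z_info rt by simp
  have b: "u r \<in> borel_measurable (info M J Y X t)" using u_info rt by simp
  show ?thesis unfolding xi_def ipK_expl
    using fst_meas[OF a] snd_meas[OF a] fst_meas[OF b] snd_meas[OF b] by measurable
qed

lemma xi_cross:
  assumes rt: "r < t"
  shows "integral\<^sup>L M (\<lambda>\<omega>. xi i r \<omega> * xi i t \<omega>) = 0"
proof -
  define h1 where "h1 \<omega> = xi i r \<omega> * snd (Z t \<omega> $ i)" for \<omega>
  define h2 where "h2 \<omega> = xi i r \<omega> * fst (Z t \<omega> $ i)" for \<omega>
  have zt: "(\<lambda>\<omega>. Z t \<omega> $ i) \<in> borel_measurable (info M J Y X (t - 1))" using Z_info by simp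
  have xr: "xi i r \<in> borel_measurable (info M J Y X (t - 1))" using xi_info rt by simp
  have h1F: "h1 \<in> borel_measurable (info M J Y X (t - 1))" unfolding h1_def using xr snd_meas[OF zt] by measurable
  have h2F: "h2 \<in> borel_measurable (info M J Y X (t - 1))" unfolding h2_def using xr fst_meas[OF zt] by measurable
  have LZ: "L4 M (\<lambda>\<omega>. fst (Z t \<omega> $ i))" "L4 M (\<lambda>\<omega>. snd (Z t \<omega> $ i))" using L4I_Z unfolding L4I_def by auto
  have LU: "L4 M (\<lambda>\<omega>. fst (u t \<omega>))" "L4 M (\<lambda>\<omega>. snd (u t \<omega>))" using L4I_u unfolding L4I_def by auto
  have int: "integrable M (\<lambda>x. h x * c x)" if "h = h1 \<or> h = h2" "c = (\<lambda>\<omega>. fst (u t \<omega>)) \<or> c = (\<lambda>\<omega>. snd (u t \<omega>))" for h c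
  proof -
    have "integrable M (\<lambda>\<omega>. ipK K (Z r \<omega> $ i) (u r \<omega>) * a \<omega> * c \<omega>)" if "L4 M a" for a
      using int_ipK_ab[OF L4I_Z L4I_u that, of c] LU \<open>c = _ \<or> c = _\<close> by auto
    then show ?thesis using that LZ unfolding h1_def h2_def xi_def by auto
  qed
  have z1: "integral\<^sup>L M (\<lambda>x. h1 x * fst (u t x)) = 0" "integral\<^sup>L M (\<lambda>x. h1 x * snd (u t x)) = 0"
    using mds_zero[OF h1F] int by auto
  have z2: "integral\<^sup>L M (\<lambda>x. h2 x * fst (u t x)) = 0" "integral\<^sup>L M (\<lambda>x. h2 x * snd (u t x)) = 0"
    using mds_zero[OF h2F] int by auto
  have pw: "xi i r \<omega> * xi i t \<omega> = K 1 1 * (h1 \<omega> * snd (u t \<omega>)) - K 1 (-1) * (h1 \<omega> * fst (u t \<omega>))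
      - K (-1) 1 * (h2 \<omega> * snd (u t \<omega>)) + K (-1) (-1) * (h2 \<omega> * fst (u t \<omega>))" for \<omega>
    unfolding h1_def h2_def xi_def[of i t] ipK_expl[of K "Z t \<omega> $ i"] by (simp add: algebra_simps)
  have "integral\<^sup>L M (\<lambda>\<omega>. xi i r \<omega> * xi i t \<omega>) = K 1 1 * integral\<^sup>L M (\<lambda>x. h1 x * snd (u t x))
      - K 1 (-1) * integral\<^sup>L M (\<lambda>x. h1 x * fst (u t x))
      - K (-1) 1 * integral\<^sup>L M (\<lambda>x. h2 x * snd (u t x)) + K (-1) (-1) * integral\<^sup>L M (\<lambda>x. h2 x * fst (u t x))"
    unfolding pw using int by (simp add: integral_add integral_diff)
  then show ?thesis using z1 z2 by simp
qed

lemma xi_sq_int: "integrable M (\<lambda>\<omega>. xi i r \<omega> * xi i t \<omega>)"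
  unfolding xi_def by (rule int_ipK2[OF L4I_Z L4I_u L4I_Z L4I_u])

lemma ES2:
  "integral\<^sup>L M (\<lambda>\<omega>. (\<Sum>t\<in>S. xi i t \<omega>)\<^sup>2) = (\<Sum>t\<in>S. integral\<^sup>L M (\<lambda>\<omega>. (xi i t \<omega>)\<^sup>2))"
  if fin: "finite S"
proof -
  have "(\<lambda>\<omega>. (\<Sum>t\<in>S. xi i t \<omega>)\<^sup>2) = (\<lambda>\<omega>. \<Sum>r\<in>S. \<Sum>t\<in>S. xi i r \<omega> * xi i t \<omega>)"
    by (simp add: power2_eq_square sum_product)
  then have "integral\<^sup>L M (\<lambda>\<omega>. (\<Sum>t\<in>S. xi i t \<omega>)\<^sup>2) = (\<Sum>r\<in>S. \<Sum>t\<in>S. integral\<^sup>L M (\<lambda>\<omega>. xi i r \<omega> * xi i t \<omega>))"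
    using xi_sq_int by (simp add: Bochner_Integration.integral_sum Bochner_Integration.integrable_sum)
  also have "\<dots> = (\<Sum>r\<in>S. \<Sum>t\<in>S. if t = r then integral\<^sup>L M (\<lambda>\<omega>. (xi i r \<omega>)\<^sup>2) else 0)"
  proof (intro sum.cong refl)
    fix r t
    show "integral\<^sup>L M (\<lambda>\<omega>. xi i r \<omega> * xi i t \<omega>) = (if t = r then integral\<^sup>L M (\<lambda>\<omega>. (xi i r \<omega>)\<^sup>2) else 0)"
    proof (cases "t = r")
      case True then show ?thesis by (simp add: power2_eq_square)
    next
      case False
      then consider "r < t" | "t < r" by linarith
      then show ?thesis
      proof cases
        case 1 then show ?thesis using xi_cross False by simp
      next
        case 2 then show ?thesis using xi_cross[OF 2, of i] False by (simp add: mult.commute)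
      qed
    qed
  qed
  also have "\<dots> = (\<Sum>r\<in>S. integral\<^sup>L M (\<lambda>\<omega>. (xi i r \<omega>)\<^sup>2))"
    using fin by (simp add: sum.delta)
  finally show ?thesis .
qed

definition upath :: "(int \<times> nat \<Rightarrow> interval) \<Rightarrow> interval" where
  "upath f = f (0, 0) - lincomb (Zp idx q J f) \<theta>0"

definition hp :: "'p \<Rightarrow> (int \<times> nat \<Rightarrow> interval) \<Rightarrow> real" where
  "hp i f = ipK K (Zp idx q J f $ i) (upath f)"

definition gp :: "'p \<Rightarrow> 'p \<Rightarrow> (int \<times> nat \<Rightarrow> interval) \<Rightarrow> real" where
  "gp i j f = ipK K (Zp idx q J f $ i) (Zp idx q J f $ j)"

lemma upath_meas: "upath \<in> borel_measurable path_space"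
proof -
  have c: "(\<lambda>f. f (0::int, 0::nat)) \<in> borel_measurable path_space"
    unfolding path_space_def by measurable
  show ?thesis unfolding upath_def using c lincomb_meas[OF Zp_meas] by measurable
qed

lemma hp_meas: "hp i \<in> borel_measurable path_space"
  unfolding hp_def ipK_expl using fst_meas[OF Zp_meas] snd_meas[OF Zp_meas] fst_meas[OF upath_meas] snd_meas[OF upath_meas]
  by measurable

lemma gp_meas: "gp i j \<in> borel_measurable path_space"
  unfolding gp_def ipK_expl using fst_meas[OF Zp_meas] snd_meas[OF Zp_meas]
  by measurable

lemma Z_path_vec: "Z (int k) \<omega> = Zp idx q J ((shift ^^ k) (W \<omega>))"
  using Z_path by (simp add: vec_eq_iff)

lemma u_path: "\<omega> \<in> space M \<Longrightarrow> u (int k) \<omega> = upath ((shift ^^ k) (W \<omega>))"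
  unfolding u_eq upath_def Z_path_vec[symmetric] by (simp add: shift_pow joint_path_def)

lemma xi_path: "\<omega> \<in> space M \<Longrightarrow> xi i (int k) \<omega> = hp i ((shift ^^ k) (W \<omega>))"
  unfolding xi_def hp_def using u_path Z_path by simp

lemma ipZ_path: "ipK K (Z (int k) \<omega> $ i) (Z (int k) \<omega> $ j) = gp i j ((shift ^^ k) (W \<omega>))"
  unfolding gp_def using Z_path by simp

lemma stat_int:
  fixes F :: "(int \<times> nat \<Rightarrow> interval) \<Rightarrow> real"
  assumes Fm: "F \<in> borel_measurable path_space"
  shows "integral\<^sup>L M (\<lambda>\<omega>. F ((shift ^^ k) (W \<omega>))) = integral\<^sup>L M (\<lambda>\<omega>. F (W \<omega>))"
proof -
  interpret E: mp_erg P shift by (rule P_erg)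
  have pm: "(shift ^^ k) \<in> measurable path_space path_space" using E.Tpow_meas[of k] unfolding measurable_P .
  have "integral\<^sup>L M (\<lambda>\<omega>. F ((shift ^^ k) (W \<omega>))) = integral\<^sup>L P (\<lambda>f. F ((shift ^^ k) f))"
    unfolding P_def
  proof -
    have Fk: "(\<lambda>f. F ((shift ^^ k) f)) \<in> borel_measurable path_space"
      using measurable_comp[OF pm Fm] by (simp add: comp_def)
    show "integral\<^sup>L M (\<lambda>\<omega>. F ((shift ^^ k) (W \<omega>))) = integral\<^sup>L (distr M path_space W) (\<lambda>f. F ((shift ^^ k) f))"
      by (rule integral_distr[OF W_meas Fk, symmetric])
  qed
  also have "\<dots> = integral\<^sup>L (distr P P (shift ^^ k)) F"
    using Fm E.Tpow_meas by (intro integral_distr[symmetric]) (auto simp: measurable_P)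
  also have "\<dots> = integral\<^sup>L P F" using E.distr_pow by simp
  also have "\<dots> = integral\<^sup>L M (\<lambda>\<omega>. F (W \<omega>))"
    unfolding P_def using Fm by (intro integral_distr) auto
  finally show ?thesis .
qed

definition Bi :: "'p \<Rightarrow> real" where
  "Bi i = integral\<^sup>L M (\<lambda>\<omega>. (hp i (W \<omega>))\<^sup>2)"

lemma Exi2: "t \<ge> 0 \<Longrightarrow> integral\<^sup>L M (\<lambda>\<omega>. (xi i t \<omega>)\<^sup>2) = Bi i"
proof -
  assume "t \<ge> 0"
  then obtain k where k: "t = int k" by (metis nonneg_eq_int)
  have "integral\<^sup>L M (\<lambda>\<omega>. (xi i t \<omega>)\<^sup>2) = integral\<^sup>L M (\<lambda>\<omega>. (hp i ((shift ^^ k) (W \<omega>)))\<^sup>2)"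
    unfolding k by (rule Bochner_Integration.integral_cong) (auto simp: xi_path)
  also have "\<dots> = Bi i" unfolding Bi_def using hp_meas by (intro stat_int) measurable
  finally show ?thesis .
qed

lemma ES2_T: "integral\<^sup>L M (\<lambda>\<omega>. (\<Sum>t\<in>{1..int T}. xi i t \<omega>)\<^sup>2) = real T * Bi i"
  using ES2[of "{1..int T}" i] Exi2 by simp

lemma score_tail:
  assumes c: "c > 0"
  shows "measure M {\<omega> \<in> space M. \<bar>\<Sum>t\<in>{1..int T}. xi i t \<omega>\<bar> \<ge> c} \<le> real T * Bi i / c\<^sup>2"
proof -
  let ?S = "\<lambda>\<omega>. \<Sum>t\<in>{1..int T}. xi i t \<omega>"
  have Sm: "?S \<in> borel_measurable M" using xi_meas by measurable
  have Si: "integrable M (\<lambda>\<omega>. (?S \<omega>)\<^sup>2)"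
  proof -
    have "(\<lambda>\<omega>. (?S \<omega>)\<^sup>2) = (\<lambda>\<omega>. \<Sum>r\<in>{1..int T}. \<Sum>t\<in>{1..int T}. xi i r \<omega> * xi i t \<omega>)"
      by (simp add: power2_eq_square sum_product)
    then show ?thesis using xi_sq_int by (simp add: Bochner_Integration.integrable_sum)
  qed
  have sets: "{\<omega> \<in> space M. (?S \<omega>)\<^sup>2 \<ge> c\<^sup>2} \<in> sets M" using Sm by measurable
  have "measure M {\<omega> \<in> space M. \<bar>?S \<omega>\<bar> \<ge> c} \<le> measure M {\<omega> \<in> space M. (?S \<omega>)\<^sup>2 \<ge> c\<^sup>2}"
  proof (rule finite_measure_mono[OF _ sets])
    show "{\<omega> \<in> space M. \<bar>?S \<omega>\<bar> \<ge> c} \<subseteq> {\<omega> \<in> space M. (?S \<omega>)\<^sup>2 \<ge> c\<^sup>2}"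
    proof safe
      fix \<omega> assume "c \<le> \<bar>?S \<omega>\<bar>"
      then have "c\<^sup>2 \<le> \<bar>?S \<omega>\<bar>\<^sup>2" using c by (intro power_mono) auto
      then show "c\<^sup>2 \<le> (?S \<omega>)\<^sup>2" by simp
    qed
  qed
  also have "\<dots> \<le> integral\<^sup>L M (\<lambda>\<omega>. (?S \<omega>)\<^sup>2) / c\<^sup>2"
    by (rule integral_Markov_inequality_measure[OF Si sets]) (use c in auto)
  also have "\<dots> = real T * Bi i / c\<^sup>2" using ES2_T by simp
  finally show ?thesis .
qed

end

context mp_erg
begin

lemma ergodic_two:
  assumes f: "integrable N f" and eta: "\<eta> > 0"
  shows "(\<lambda>n. measure N {x \<in> space N. \<bar>BS f n x - real n * integral\<^sup>L N f\<bar> \<ge> real n * \<eta>}) \<longlonglongrightarrow> 0"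
proof -
  have fm[measurable]: "f \<in> borel_measurable N" using f by auto
  have f': "integrable N (\<lambda>x. - f x)" using f by simp
  have bsn: "BS (\<lambda>x. - f x) n x = - BS f n x" for n x unfolding BS_def by (simp add: sum_negf)
  let ?A = "\<lambda>n. {x \<in> space N. BS f n x \<ge> real n * (integral\<^sup>L N f + \<eta>)}"
  let ?B = "\<lambda>n. {x \<in> space N. BS (\<lambda>x. - f x) n x \<ge> real n * (integral\<^sup>L N (\<lambda>x. - f x) + \<eta>)}"
  have LA: "(\<lambda>n. measure N (?A n)) \<longlonglongrightarrow> 0" by (rule ergodic_upper[OF f eta])
  have LB: "(\<lambda>n. measure N (?B n)) \<longlonglongrightarrow> 0" by (rule ergodic_upper[OF f' eta])
  have Am: "?A n \<in> sets N" for n using BS_meas[OF fm] by measurable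
  have f'm: "(\<lambda>x. - f x) \<in> borel_measurable N" by measurable
  have Bm: "?B n \<in> sets N" for n using BS_meas[OF f'm] by measurable
  show ?thesis
  proof (rule tendsto_sandwich[OF _ _ tendsto_const])
    show "\<forall>\<^sub>F n in sequentially. 0 \<le> measure N {x \<in> space N. \<bar>BS f n x - real n * integral\<^sup>L N f\<bar> \<ge> real n * \<eta>}"
      by (intro always_eventually allI measure_nonneg)
    show "(\<lambda>n. measure N (?A n) + measure N (?B n)) \<longlonglongrightarrow> 0" using tendsto_add[OF LA LB] by simp
    show "\<forall>\<^sub>F n in sequentially. measure N {x \<in> space N. \<bar>BS f n x - real n * integral\<^sup>L N f\<bar> \<ge> real n * \<eta>}
       \<le> measure N (?A n) + measure N (?B n)"
    proof (intro always_eventually allI)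
      fix n
      have "{x \<in> space N. \<bar>BS f n x - real n * integral\<^sup>L N f\<bar> \<ge> real n * \<eta>} \<subseteq> ?A n \<union> ?B n"
        unfolding bsn by (auto simp: algebra_simps abs_if split: if_splits)
      then have "measure N {x \<in> space N. \<bar>BS f n x - real n * integral\<^sup>L N f\<bar> \<ge> real n * \<eta>} \<le> measure N (?A n \<union> ?B n)"
        using Am Bm by (intro finite_measure_mono) auto
      also have "\<dots> \<le> measure N (?A n) + measure N (?B n)" by (rule measure_Un_le[OF Am Bm])
      finally show "measure N {x \<in> space N. \<bar>BS f n x - real n * integral\<^sup>L N f\<bar> \<ge> real n * \<eta>} \<le> measure N (?A n) + measure N (?B n)" .
    qed
  qed
qed

end

lemma sum_int_range: "(\<Sum>t\<in>{1..int T}. f t) = (\<Sum>k<T. f (int (Suc k)))"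
proof (induction T)
  case 0 then show ?case by simp
next
  case (Suc T)
  have e: "{1..int (Suc T)} = insert (int (Suc T)) {1..int T}" by auto
  show ?case unfolding e using Suc by (simp add: add.commute)
qed

context acix
begin

definition Amat :: "'p \<Rightarrow> 'p \<Rightarrow> real" where
  "Amat i j = integral\<^sup>L M (\<lambda>\<omega>. ipK K (Z 0 \<omega> $ i) (Z 0 \<omega> $ j))"

definition Hs :: "nat \<Rightarrow> 'p \<Rightarrow> 'p \<Rightarrow> 'a \<Rightarrow> real" where
  "Hs T i j \<omega> = (\<Sum>t\<in>{1..int T}. ipK K (Z t \<omega> $ i) (Z t \<omega> $ j))"

lemma Hs_meas: "Hs T i j \<in> borel_measurable M"
  unfolding Hs_def using ipK_meas[OF L4I_Z L4I_Z] by measurable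

lemma hess_conv:
  assumes eta: "\<eta> > 0"
  shows "(\<lambda>T. measure M {\<omega> \<in> space M. \<bar>Hs T i j \<omega> - real T * Amat i j\<bar> \<ge> real T * \<eta>}) \<longlonglongrightarrow> 0"
proof -
  interpret E: mp_erg P shift by (rule P_erg)
  have gm: "gp i j \<in> borel_measurable path_space" by (rule gp_meas)
  have Wg: "gp i j (W \<omega>) = ipK K (Z 0 \<omega> $ i) (Z 0 \<omega> $ j)" for \<omega>
    using ipZ_path[of 0 \<omega> i j] by simp
  have giM: "integrable M (\<lambda>\<omega>. gp i j (W \<omega>))" unfolding Wg by (rule int_ipK[OF L4I_Z L4I_Z])
  have giP: "integrable P (gp i j)" unfolding P_def using integrable_distr_eq[OF W_meas gm] giM by simp
  define F where "F f = gp i j (shift f)" for f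
  have Fi: "integrable P F" unfolding F_def by (rule E.T_int(1)[OF giP])
  have FI: "integral\<^sup>L P F = Amat i j"
  proof -
    have "integral\<^sup>L P F = integral\<^sup>L P (gp i j)" unfolding F_def by (rule E.T_int(2)[OF giP])
    also have "\<dots> = integral\<^sup>L M (\<lambda>\<omega>. gp i j (W \<omega>))" unfolding P_def by (rule integral_distr[OF W_meas gm])
    finally show ?thesis unfolding Wg Amat_def .
  qed
  have Fm: "F \<in> borel_measurable P" using Fi by auto
  have BSeq: "E.BS F T (W \<omega>) = Hs T i j \<omega>" for T \<omega>
  proof -
    have "E.BS F T (W \<omega>) = (\<Sum>k<T. gp i j ((shift ^^ Suc k) (W \<omega>)))"
      unfolding E.BS_def F_def by simp
    also have "\<dots> = Hs T i j \<omega>" unfolding Hs_def sum_int_range ipZ_path ..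
    finally show ?thesis .
  qed
  have L: "(\<lambda>n. measure P {x \<in> space P. \<bar>E.BS F n x - real n * integral\<^sup>L P F\<bar> \<ge> real n * \<eta>}) \<longlonglongrightarrow> 0"
    by (rule E.ergodic_two[OF Fi eta])
  have eq: "measure P {x \<in> space P. \<bar>E.BS F n x - real n * integral\<^sup>L P F\<bar> \<ge> real n * \<eta>}
      = measure M {\<omega> \<in> space M. \<bar>Hs n i j \<omega> - real n * Amat i j\<bar> \<ge> real n * \<eta>}" for n
  proof -
    have S: "{x \<in> space P. \<bar>E.BS F n x - real n * integral\<^sup>L P F\<bar> \<ge> real n * \<eta>} \<in> sets path_space"
    proof -
      have bm: "E.BS F n \<in> borel_measurable path_space" using E.BS_meas[OF Fm, of n] unfolding measurable_P .
      have "{x \<in> space path_space. \<bar>E.BS F n x - real n * integral\<^sup>L P F\<bar> \<ge> real n * \<eta>} \<in> sets path_space"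
        using bm by measurable
      then show ?thesis by simp
    qed
    have "measure P {x \<in> space P. \<bar>E.BS F n x - real n * integral\<^sup>L P F\<bar> \<ge> real n * \<eta>}
      = measure M (W -` {x \<in> space P. \<bar>E.BS F n x - real n * integral\<^sup>L P F\<bar> \<ge> real n * \<eta>} \<inter> space M)"
      unfolding P_def by (rule measure_distr[OF W_meas S[unfolded P_def]])
    also have "W -` {x \<in> space P. \<bar>E.BS F n x - real n * integral\<^sup>L P F\<bar> \<ge> real n * \<eta>} \<inter> space M
       = {\<omega> \<in> space M. \<bar>Hs n i j \<omega> - real n * Amat i j\<bar> \<ge> real n * \<eta>}"
      unfolding FI by (auto simp: space_path BSeq)
    finally show ?thesis .
  qed
  show ?thesis using L unfolding eq .
qed

end

lemma exists_m: "\<exists>m>0. \<forall>j. (\<theta>0::real^'p::finite) $ j \<noteq> 0 \<longrightarrow> m \<le> \<bar>\<theta>0 $ j\<bar>"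
proof -
  let ?S = "insert 1 ((\<lambda>j. \<bar>\<theta>0 $ j\<bar>) ` {j. \<theta>0 $ j \<noteq> 0})"
  have fin: "finite ?S" by simp
  have pos: "\<forall>x\<in>?S. x > 0" by auto
  have "Min ?S > 0" using fin pos by (subst Min_gr_iff) auto
  moreover have "\<forall>j. \<theta>0 $ j \<noteq> 0 \<longrightarrow> Min ?S \<le> \<bar>\<theta>0 $ j\<bar>" using fin by (auto intro: Min_le)
  ultimately show ?thesis by blast
qed

lemma pen_bound:
  fixes \<theta>h \<theta>t \<theta>0 :: "real ^ 'p::finite"
  assumes m: "m > 0" and g: "\<gamma> > 0"
    and big: "\<And>j. \<theta>0 $ j \<noteq> 0 \<Longrightarrow> \<bar>\<theta>t $ j\<bar> \<ge> m / 2"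
  shows "(\<Sum>j\<in>{j. \<theta>t $ j \<noteq> 0}. \<bar>\<theta>h $ j\<bar> / \<bar>\<theta>t $ j\<bar> powr \<gamma>) - (\<Sum>j\<in>{j. \<theta>t $ j \<noteq> 0}. \<bar>\<theta>0 $ j\<bar> / \<bar>\<theta>t $ j\<bar> powr \<gamma>)
     \<ge> - (real CARD('p) / (m / 2) powr \<gamma>) * norm (\<theta>h - \<theta>0)"
proof -
  let ?J = "{j. \<theta>t $ j \<noteq> 0}"
  have tm: "\<bar>\<theta>h $ j\<bar> / \<bar>\<theta>t $ j\<bar> powr \<gamma> - \<bar>\<theta>0 $ j\<bar> / \<bar>\<theta>t $ j\<bar> powr \<gamma> \<ge> - (norm (\<theta>h - \<theta>0) / (m / 2) powr \<gamma>)"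
    if j: "j \<in> ?J" for j
  proof (cases "\<theta>0 $ j = 0")
    case True
    have "\<bar>\<theta>h $ j\<bar> / \<bar>\<theta>t $ j\<bar> powr \<gamma> \<ge> 0" by simp
    moreover have "norm (\<theta>h - \<theta>0) / (m / 2) powr \<gamma> \<ge> 0" by simp
    moreover have "\<bar>\<theta>0 $ j\<bar> / \<bar>\<theta>t $ j\<bar> powr \<gamma> = 0" using True by simp
    ultimately show ?thesis by linarith
  next
    case False
    have mt: "m / 2 \<le> \<bar>\<theta>t $ j\<bar>" using big[OF False] .
    have wpos: "(m / 2) powr \<gamma> > 0" using m by simp
    have w: "(m / 2) powr \<gamma> \<le> \<bar>\<theta>t $ j\<bar> powr \<gamma>" using mt m g by (intro powr_mono2) auto
    have dj: "\<bar>(\<theta>h - \<theta>0) $ j\<bar> \<le> norm (\<theta>h - \<theta>0)" by (rule component_le_norm_cart)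
    have "\<bar>\<theta>h $ j\<bar> - \<bar>\<theta>0 $ j\<bar> \<ge> - norm (\<theta>h - \<theta>0)" using dj by auto
    then have "(\<bar>\<theta>h $ j\<bar> - \<bar>\<theta>0 $ j\<bar>) / \<bar>\<theta>t $ j\<bar> powr \<gamma> \<ge> - norm (\<theta>h - \<theta>0) / \<bar>\<theta>t $ j\<bar> powr \<gamma>"
      using wpos w by (intro divide_right_mono) auto
    moreover have "- norm (\<theta>h - \<theta>0) / \<bar>\<theta>t $ j\<bar> powr \<gamma> \<ge> - (norm (\<theta>h - \<theta>0) / (m / 2) powr \<gamma>)"
      using wpos w by (simp add: frac_le)
    ultimately show ?thesis by (simp add: diff_divide_distrib)
  qed
  have "(\<Sum>j\<in>?J. \<bar>\<theta>h $ j\<bar> / \<bar>\<theta>t $ j\<bar> powr \<gamma>) - (\<Sum>j\<in>?J. \<bar>\<theta>0 $ j\<bar> / \<bar>\<theta>t $ j\<bar> powr \<gamma>)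
      = (\<Sum>j\<in>?J. \<bar>\<theta>h $ j\<bar> / \<bar>\<theta>t $ j\<bar> powr \<gamma> - \<bar>\<theta>0 $ j\<bar> / \<bar>\<theta>t $ j\<bar> powr \<gamma>)"
    by (simp add: sum_subtractf)
  also have "\<dots> \<ge> (\<Sum>j\<in>?J. - (norm (\<theta>h - \<theta>0) / (m / 2) powr \<gamma>))" by (rule sum_mono) (rule tm)
  finally have 1: "(\<Sum>j\<in>?J. \<bar>\<theta>h $ j\<bar> / \<bar>\<theta>t $ j\<bar> powr \<gamma>) - (\<Sum>j\<in>?J. \<bar>\<theta>0 $ j\<bar> / \<bar>\<theta>t $ j\<bar> powr \<gamma>)
      \<ge> - (real (card ?J) * (norm (\<theta>h - \<theta>0) / (m / 2) powr \<gamma>))" by simp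
  have "real (card ?J) \<le> real CARD('p)" by (simp add: card_mono)
  then have "real (card ?J) * (norm (\<theta>h - \<theta>0) / (m / 2) powr \<gamma>) \<le> real CARD('p) * (norm (\<theta>h - \<theta>0) / (m / 2) powr \<gamma>)"
    by (intro mult_right_mono) auto
  then show ?thesis using 1 by simp
qed

context acix
begin

lemma Q_eq: "(\<Sum>t\<in>{1..int T}. ipK K (lincomb (Z t \<omega>) \<delta>) (lincomb (Z t \<omega>) \<delta>))
   = (\<Sum>i\<in>UNIV. \<Sum>j\<in>UNIV. \<delta> $ i * \<delta> $ j * Hs T i j \<omega>)"
  unfolding ipK_lincomb_both Hs_def sum_distrib_left
  by (subst sum.swap, rule sum.cong[OF refl], subst sum.swap, simp)

lemma det_step:
  assumes \<omega>: "\<omega> \<in> space M" and a: "a > 0"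
    and qb: "\<And>x. (\<Sum>i\<in>UNIV. \<Sum>j\<in>UNIV. x $ i * x $ j * Hs T i j \<omega>) \<ge> a * (norm x)\<^sup>2"
    and opt: "DK_obj K Y Z T \<omega> \<theta>' + Pa \<le> DK_obj K Y Z T \<omega> \<theta>0 + Pb"
    and pen: "Pa - Pb \<ge> - L * norm (\<theta>' - \<theta>0)" and L: "L \<ge> 0"
  shows "norm (\<theta>' - \<theta>0) \<le> (2 * norm (\<chi> i. \<Sum>t\<in>{1..int T}. xi i t \<omega>) + L) / a"
proof -
  define \<delta> where "\<delta> = \<theta>' - \<theta>0"
  have th: "\<theta>' = \<theta>0 + \<delta>" unfolding \<delta>_def by simp
  define Sv where "Sv = (\<chi> i. \<Sum>t\<in>{1..int T}. xi i t \<omega>)"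
  have Sv': "(\<chi> i. \<Sum>t\<in>{1..int T}. ipK K (Z t \<omega> $ i) (u t \<omega>)) = Sv" unfolding Sv_def xi_def ..
  have ex: "DK_obj K Y Z T \<omega> \<theta>' = DK_obj K Y Z T \<omega> \<theta>0 - 2 * (\<delta> \<bullet> Sv)
      + (\<Sum>i\<in>UNIV. \<Sum>j\<in>UNIV. \<delta> $ i * \<delta> $ j * Hs T i j \<omega>)"
    unfolding th using DK_expand[OF kernel, of Y \<omega> Z \<theta>0 u T \<delta>] model[OF \<omega>] unfolding Sv' Q_eq by simp
  show ?thesis
    unfolding Sv_def[symmetric] \<delta>_def[symmetric]
  proof (rule gen_bound)
    show "(\<Sum>i\<in>UNIV. \<Sum>j\<in>UNIV. \<delta> $ i * \<delta> $ j * Hs T i j \<omega>) \<ge> a * (norm \<delta>)\<^sup>2" by (rule qb)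
    show "(\<Sum>i\<in>UNIV. \<Sum>j\<in>UNIV. \<delta> $ i * \<delta> $ j * Hs T i j \<omega>) - 2 * (\<delta> \<bullet> Sv) + Pa \<le> Pb"
      using opt ex by simp
    show "Pa - Pb \<ge> - L * norm \<delta>" using pen unfolding \<delta>_def .
    show "\<delta> \<bullet> Sv \<le> norm Sv * norm \<delta>" using norm_cauchy_schwarz[of \<delta> Sv] by (simp add: mult.commute)
  qed (use a L in auto)
qed

end

lemma arith1:
  fixes T c0 X A l W :: real
  assumes T: "T > 0" and c0: "c0 > 0" and X: "X \<le> A * sqrt T" and l0: "l \<ge> 0" and l: "l \<le> sqrt T" and W: "W \<ge> 0"
  shows "(2 * X + l * W) / (T * c0 / 2) \<le> 2 * (2 * A + W) / c0 * (1 / sqrt T)"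
proof -
  define s where "s = sqrt T"
  have s: "s > 0" unfolding s_def using T by simp
  have Ts: "T = s * s" unfolding s_def using T by simp
  have "2 * X + l * W \<le> 2 * (A * s) + s * W" using X l W unfolding s_def[symmetric] by (intro add_mono mult_right_mono) auto
  also have "\<dots> = s * (2 * A + W)" by (simp add: algebra_simps)
  finally have n: "2 * X + l * W \<le> s * (2 * A + W)" .
  have "(2 * X + l * W) / (T * c0 / 2) \<le> s * (2 * A + W) / (T * c0 / 2)"
    using n T c0 by (intro divide_right_mono) auto
  also have "\<dots> = 2 * (2 * A + W) / c0 * (1 / s)" unfolding Ts using s c0 by (simp add: field_simps)
  finally show ?thesis unfolding s_def .
qed

context acix
begin

lemma Bi_nonneg: "Bi i \<ge> 0"
  unfolding Bi_def by (rule integral_nonneg_AE) auto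

lemma main:
  fixes \<Theta> :: "(real ^ 'p) set" and lam :: "nat \<Rightarrow> real" and \<gamma> :: real
    and \<theta>tilde \<theta>hat :: "nat \<Rightarrow> 'a \<Rightarrow> real ^ 'p"
  assumes th0: "\<theta>0 \<in> \<Theta>"
    and pd: "pos_def_mat (\<chi> i j. Amat i j)"
    and lam_pos: "\<And>T. lam T > 0" and gamma_pos: "\<gamma> > 0"
    and lam_rate1: "(\<lambda>T. lam T / sqrt (real T)) \<longlonglongrightarrow> 0"
    and tilde_min: "\<And>T \<omega>. \<omega> \<in> space M \<Longrightarrow> \<theta>tilde T \<omega> \<in> \<Theta> \<and>
        (\<forall>\<theta>\<in>\<Theta>. DK_obj K Y Z T \<omega> (\<theta>tilde T \<omega>) \<le> DK_obj K Y Z T \<omega> \<theta>)"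
    and hat_min: "\<And>T \<omega>. \<omega> \<in> space M \<Longrightarrow>
        \<theta>hat T \<omega> \<in> adalasso_dom \<Theta> (\<theta>tilde T \<omega>) \<and>
        (\<forall>\<theta>\<in>adalasso_dom \<Theta> (\<theta>tilde T \<omega>).
           adalasso_obj K Y Z (lam T) \<gamma> (\<theta>tilde T \<omega>) T \<omega> (\<theta>hat T \<omega>)
             \<le> adalasso_obj K Y Z (lam T) \<gamma> (\<theta>tilde T \<omega>) T \<omega> \<theta>)"
  shows "bigO_p M (\<lambda>T \<omega>. norm (\<theta>hat T \<omega> - \<theta>0)) (\<lambda>T. 1 / sqrt (real T))"
  unfolding bigO_p_def
proof (intro allI impI)
  fix \<epsilon> :: real assume eps: "\<epsilon> > 0"
  obtain c0 where c0: "c0 > 0" and c0b: "\<And>x. (\<Sum>i\<in>UNIV. \<Sum>j\<in>UNIV. x $ i * x $ j * Amat i j) \<ge> c0 * (norm x)\<^sup>2"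
    using pd_lb[OF pd] by auto
  define cp where "cp = real CARD('p)"
  have cp1: "cp \<ge> 1" unfolding cp_def by simp
  define \<eta> where "\<eta> = c0 / (2 * cp\<^sup>2)"
  have eta: "\<eta> > 0" unfolding \<eta>_def using c0 cp1 by simp
  have cpeta: "cp\<^sup>2 * \<eta> = c0 / 2" unfolding \<eta>_def using cp1 by simp
  obtain m where m: "m > 0" and mb: "\<And>j. \<theta>0 $ j \<noteq> 0 \<Longrightarrow> m \<le> \<bar>\<theta>0 $ j\<bar>" using exists_m[of \<theta>0] by auto
  define Bs where "Bs = (\<Sum>i\<in>UNIV. Bi i)"
  have Bs0: "Bs \<ge> 0" unfolding Bs_def by (intro sum_nonneg Bi_nonneg)
  define C where "C = sqrt (2 * (Bs + 1) / \<epsilon>)"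
  have C: "C > 0" unfolding C_def using Bs0 eps by simp
  have C2: "C\<^sup>2 = 2 * (Bs + 1) / \<epsilon>" unfolding C_def using Bs0 eps by simp
  define Wb where "Wb = cp / (m / 2) powr \<gamma>"
  have Wb: "Wb \<ge> 0" unfolding Wb_def using cp1 by simp
  define Cf where "Cf = 2 * (2 * (cp * C) + Wb) / c0"
  define A2 where "A2 T i j = {\<omega> \<in> space M. \<bar>Hs T i j \<omega> - real T * Amat i j\<bar> \<ge> real T * \<eta>}" for T i j
  define A3 where "A3 T i = {\<omega> \<in> space M. \<bar>\<Sum>t\<in>{1..int T}. xi i t \<omega>\<bar> \<ge> C * sqrt (real T)}" for T i
  have A2s: "A2 T i j \<in> sets M" for T i j unfolding A2_def using Hs_meas by measurable
  have A3s: "A3 T i \<in> sets M" for T i unfolding A3_def using xi_meas by measurable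
  have L2: "(\<lambda>T. \<Sum>i\<in>UNIV. \<Sum>j\<in>UNIV. measure M (A2 T i j)) \<longlonglongrightarrow> 0"
    unfolding A2_def using hess_conv[OF eta] by (auto intro!: tendsto_null_sum)
  have "eventually (\<lambda>T. (\<Sum>i\<in>UNIV. \<Sum>j\<in>UNIV. measure M (A2 T i j)) < \<epsilon> / 2) sequentially"
    using order_tendstoD(2)[OF L2, of "\<epsilon> / 2"] eps by simp
  then obtain N1 where N1': "\<forall>T\<ge>N1. (\<Sum>i\<in>UNIV. \<Sum>j\<in>UNIV. measure M (A2 T i j)) < \<epsilon> / 2"
    unfolding eventually_sequentially by blast
  then have N1: "\<And>T. T \<ge> N1 \<Longrightarrow> (\<Sum>i\<in>UNIV. \<Sum>j\<in>UNIV. measure M (A2 T i j)) < \<epsilon> / 2" by blast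
  obtain N2 where N2: "\<And>T. T \<ge> N2 \<Longrightarrow> lam T / sqrt (real T) < 1"
    using order_tendstoD(2)[OF lam_rate1, of 1] by (auto simp: eventually_sequentially)
  define K3 where "K3 = 8 * cp * C / (c0 * m)"
  define N3 where "N3 = nat \<lceil>K3\<^sup>2\<rceil> + 1"
  define N where "N = max (max N1 N2) (max N3 1)"
  have A3b: "measure M (\<Union>i\<in>UNIV. A3 T i) < \<epsilon> / 2" if T: "T \<ge> 1" for T
  proof -
    have Tp: "real T > 0" using T by simp
    have "measure M (\<Union>i\<in>UNIV. A3 T i) \<le> (\<Sum>i\<in>UNIV. measure M (A3 T i))"
      by (rule measure_UNION_le) (auto simp: A3s)
    also have "\<dots> \<le> (\<Sum>i\<in>UNIV. real T * Bi i / (C * sqrt (real T))\<^sup>2)"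
      unfolding A3_def by (intro sum_mono score_tail) (use C Tp in auto)
    also have "\<dots> = (\<Sum>i\<in>UNIV. Bi i / C\<^sup>2)"
      using Tp C by (intro sum.cong refl) (simp add: power_mult_distrib)
    also have "\<dots> = Bs / C\<^sup>2" unfolding Bs_def by (simp add: sum_divide_distrib)
    also have "\<dots> = \<epsilon> * Bs / (2 * (Bs + 1))" unfolding C2 using eps Bs0 by (simp add: field_simps)
    also have "\<dots> < \<epsilon> / 2" using eps Bs0 by (simp add: field_simps)
    finally show ?thesis .
  qed
  have A2b: "measure M (\<Union>i\<in>UNIV. \<Union>j\<in>UNIV. A2 T i j) < \<epsilon> / 2" if T: "T \<ge> N1" for T
  proof -
    have "measure M (\<Union>i\<in>UNIV. \<Union>j\<in>UNIV. A2 T i j) \<le> (\<Sum>i\<in>UNIV. measure M (\<Union>j\<in>UNIV. A2 T i j))"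
      by (rule measure_UNION_le) (auto simp: A2s)
    also have "\<dots> \<le> (\<Sum>i\<in>UNIV. \<Sum>j\<in>UNIV. measure M (A2 T i j))"
      by (intro sum_mono measure_UNION_le) (auto simp: A2s)
    also have "\<dots> < \<epsilon> / 2" by (rule N1[OF T])
    finally show ?thesis .
  qed
  have good: "norm (\<theta>hat T \<omega> - \<theta>0) \<le> Cf * (1 / sqrt (real T))"
    if T: "T \<ge> N" and \<omega>: "\<omega> \<in> space M" and n2: "\<omega> \<notin> (\<Union>i\<in>UNIV. \<Union>j\<in>UNIV. A2 T i j)"
      and n3: "\<omega> \<notin> (\<Union>i\<in>UNIV. A3 T i)" for T \<omega>
  proof -
    have T1: "T \<ge> 1" and TN2: "T \<ge> N2" and TN3: "T \<ge> N3" using T unfolding N_def by auto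
    have Tp: "real T > 0" using T1 by simp
    have close: "\<bar>Hs T i j \<omega> - real T * Amat i j\<bar> \<le> real T * \<eta>" for i j
    proof -
      have "\<not> real T * \<eta> \<le> \<bar>Hs T i j \<omega> - real T * Amat i j\<bar>" using n2 \<omega> unfolding A2_def by blast
      then show ?thesis by linarith
    qed
    define a where "a = real T * c0 / 2"
    have a: "a > 0" unfolding a_def using Tp c0 by simp
    have qb: "(\<Sum>i\<in>UNIV. \<Sum>j\<in>UNIV. x $ i * x $ j * Hs T i j \<omega>) \<ge> a * (norm x)\<^sup>2" for x
    proof -
      have "(\<Sum>i\<in>UNIV. \<Sum>j\<in>UNIV. x $ i * x $ j * (real T * Amat i j)) = real T * (\<Sum>i\<in>UNIV. \<Sum>j\<in>UNIV. x $ i * x $ j * Amat i j)"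
        by (simp add: sum_distrib_left algebra_simps)
      also have "\<dots> \<ge> real T * (c0 * (norm x)\<^sup>2)" using c0b Tp by (intro mult_left_mono) auto
      finally have h: "(\<Sum>i\<in>UNIV. \<Sum>j\<in>UNIV. x $ i * x $ j * (real T * Amat i j)) \<ge> (real T * c0) * (norm x)\<^sup>2"
        by (simp add: mult.assoc)
      have "(\<Sum>i\<in>UNIV. \<Sum>j\<in>UNIV. x $ i * x $ j * Hs T i j \<omega>) \<ge> (real T * c0 - real CARD('p)^2 * (real T * \<eta>)) * (norm x)\<^sup>2"
        by (rule quad_perturb[OF h]) (use close Tp eta in auto)
      also have "real T * c0 - real CARD('p)^2 * (real T * \<eta>) = a"
        unfolding a_def using cpeta unfolding cp_def by (simp add: algebra_simps)
      finally show ?thesis .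
    qed
    define Sv where "Sv = (\<chi> i. \<Sum>t\<in>{1..int T}. xi i t \<omega>)"
    have Svb: "norm Sv \<le> (cp * C) * sqrt (real T)"
    proof -
      have "norm Sv \<le> (\<Sum>i\<in>UNIV. \<bar>Sv $ i\<bar>)" by (rule norm_le_l1_cart)
      also have "\<dots> \<le> (\<Sum>i\<in>(UNIV::'p set). C * sqrt (real T))"
        using n3 \<omega> unfolding A3_def Sv_def by (intro sum_mono) (auto simp: not_le less_imp_le)
      also have "\<dots> = (cp * C) * sqrt (real T)" unfolding cp_def by simp
      finally show ?thesis .
    qed
    have tm: "\<theta>tilde T \<omega> \<in> \<Theta>" "DK_obj K Y Z T \<omega> (\<theta>tilde T \<omega>) \<le> DK_obj K Y Z T \<omega> \<theta>0"
      using tilde_min[OF \<omega>, of T] th0 by auto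
    have dt: "norm (\<theta>tilde T \<omega> - \<theta>0) \<le> (2 * norm Sv + 0) / a"
      unfolding Sv_def by (rule det_step[OF \<omega> a qb, where Pa = 0 and Pb = 0]) (use tm in auto)
    also have "\<dots> \<le> 2 * (2 * (cp * C) + 0) / c0 * (1 / sqrt (real T))"
      unfolding a_def using arith1[OF Tp c0 Svb, of 0 0] by simp
    also have "\<dots> < m / 2"
    proof -
      have K3: "K3 \<ge> 0" unfolding K3_def using cp1 C c0 m by simp
      have "real T \<ge> real N3" using TN3 by simp
      moreover have "real N3 > K3\<^sup>2" unfolding N3_def by linarith
      ultimately have "K3\<^sup>2 < real T" by linarith
      then have sq: "K3 < sqrt (real T)" by (rule real_less_rsqrt)
      have "2 * (2 * (cp * C) + 0) / c0 * (1 / sqrt (real T)) = (m / 2) * (K3 / sqrt (real T))"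
        unfolding K3_def using c0 m by (simp add: field_simps)
      also have "\<dots> < (m / 2) * 1" using sq K3 m Tp by (intro mult_strict_left_mono) (auto simp: field_simps)
      finally show ?thesis by simp
    qed
    finally have dtm: "norm (\<theta>tilde T \<omega> - \<theta>0) < m / 2" .
    have big: "\<bar>\<theta>tilde T \<omega> $ j\<bar> \<ge> m / 2" if j: "\<theta>0 $ j \<noteq> 0" for j
    proof -
      have "\<bar>(\<theta>tilde T \<omega> - \<theta>0) $ j\<bar> \<le> norm (\<theta>tilde T \<omega> - \<theta>0)" by (rule component_le_norm_cart)
      then have "\<bar>\<theta>tilde T \<omega> $ j - \<theta>0 $ j\<bar> < m / 2" using dtm by simp
      moreover have "m \<le> \<bar>\<theta>0 $ j\<bar>" by (rule mb[OF j])
      ultimately show ?thesis by linarith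
    qed
    have dom: "\<theta>0 \<in> adalasso_dom \<Theta> (\<theta>tilde T \<omega>)"
      unfolding adalasso_dom_def using th0 big m by force
    have hm: "adalasso_obj K Y Z (lam T) \<gamma> (\<theta>tilde T \<omega>) T \<omega> (\<theta>hat T \<omega>)
             \<le> adalasso_obj K Y Z (lam T) \<gamma> (\<theta>tilde T \<omega>) T \<omega> \<theta>0"
      using hat_min[OF \<omega>, of T] dom by auto
    define pen where "pen \<theta> = (\<Sum>j\<in>{j. \<theta>tilde T \<omega> $ j \<noteq> 0}. \<bar>\<theta> $ j\<bar> / \<bar>\<theta>tilde T \<omega> $ j\<bar> powr \<gamma>)" for \<theta>
    have pb: "pen (\<theta>hat T \<omega>) - pen \<theta>0 \<ge> - Wb * norm (\<theta>hat T \<omega> - \<theta>0)"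
      unfolding pen_def Wb_def cp_def by (rule pen_bound[OF m gamma_pos big])
    have lpos: "lam T > 0" by (rule lam_pos)
    have pb2: "lam T * pen (\<theta>hat T \<omega>) - lam T * pen \<theta>0 \<ge> - (lam T * Wb) * norm (\<theta>hat T \<omega> - \<theta>0)"
    proof -
      have "lam T * (pen (\<theta>hat T \<omega>) - pen \<theta>0) \<ge> lam T * (- Wb * norm (\<theta>hat T \<omega> - \<theta>0))"
        using pb lpos by (intro mult_left_mono) auto
      then show ?thesis by (simp add: algebra_simps)
    qed
    have dh: "norm (\<theta>hat T \<omega> - \<theta>0) \<le> (2 * norm Sv + lam T * Wb) / a"
      unfolding Sv_def
      by (rule det_step[OF \<omega> a qb, where Pa = "lam T * pen (\<theta>hat T \<omega>)" and Pb = "lam T * pen \<theta>0"])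
         (use hm pb2 lpos Wb in \<open>auto simp: adalasso_obj_def pen_def\<close>)
    have lsq: "lam T \<le> sqrt (real T)"
    proof -
      have "lam T / sqrt (real T) < 1" using N2 TN2 by blast
      then show ?thesis using Tp by (simp add: divide_less_eq)
    qed
    have "(2 * norm Sv + lam T * Wb) / a \<le> Cf * (1 / sqrt (real T))"
      unfolding a_def Cf_def by (rule arith1[OF Tp c0 Svb _ lsq Wb]) (use lpos in auto)
    then show ?thesis using dh by linarith
  qed
  show "\<exists>Cc N. \<forall>n\<ge>N. measure M {\<omega> \<in> space M. \<bar>norm (\<theta>hat n \<omega> - \<theta>0)\<bar> > Cc * (1 / sqrt (real n))} < \<epsilon>"
  proof (intro exI allI impI)
    fix T assume T: "T \<ge> N"
    have T1: "T \<ge> 1" and TN1: "T \<ge> N1" using T unfolding N_def by auto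
    let ?B = "(\<Union>i\<in>UNIV. \<Union>j\<in>UNIV. A2 T i j) \<union> (\<Union>i\<in>UNIV. A3 T i)"
    have Bs': "?B \<in> sets M" using A2s A3s by auto
    have sub: "{\<omega> \<in> space M. \<bar>norm (\<theta>hat T \<omega> - \<theta>0)\<bar> > Cf * (1 / sqrt (real T))} \<subseteq> ?B"
      using good[OF T] by force
    have "measure M {\<omega> \<in> space M. \<bar>norm (\<theta>hat T \<omega> - \<theta>0)\<bar> > Cf * (1 / sqrt (real T))} \<le> measure M ?B"
      by (rule finite_measure_mono[OF sub Bs'])
    also have "\<dots> \<le> measure M (\<Union>i\<in>UNIV. \<Union>j\<in>UNIV. A2 T i j) + measure M (\<Union>i\<in>UNIV. A3 T i)"
      by (rule measure_Un_le) (use A2s A3s in auto)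
    also have "\<dots> < \<epsilon> / 2 + \<epsilon> / 2" by (intro add_strict_mono A2b[OF TN1] A3b[OF T1])
    finally show "measure M {\<omega> \<in> space M. \<bar>norm (\<theta>hat T \<omega> - \<theta>0)\<bar> > Cf * (1 / sqrt (real T))} < \<epsilon>" by simp
  qed
qed

end

theorem theorem1:
  fixes M :: "'a measure"
    and K :: "real \<Rightarrow> real \<Rightarrow> real"
    and q J s p :: nat
    and idx :: "'p::finite \<Rightarrow> nat"
    and Y :: "int \<Rightarrow> 'a \<Rightarrow> interval"
    and X :: "nat \<Rightarrow> int \<Rightarrow> 'a \<Rightarrow> interval"
    and u :: "int \<Rightarrow> 'a \<Rightarrow> interval"
    and \<theta>0 :: "real ^ 'p"
    and \<Theta> :: "(real ^ 'p) set"
    and \<sigma>2 :: real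
    and lam :: "nat \<Rightarrow> real"
    and \<gamma> :: real
    and \<theta>tilde \<theta>hat :: "nat \<Rightarrow> 'a \<Rightarrow> real ^ 'p"
  defines "Z \<equiv> Zvec idx q J Y X"
  assumes prob: "prob_space M"
    and kernel: "spd_kernel K"
    and p_def: "p = 2 + q + J * (s + 1)"
    and idx: "bij_betw idx UNIV {..<p}"
    and Y_rv: "\<And>t. Y t \<in> borel_measurable M"
    and X_rv: "\<And>j t. 1 \<le> j \<Longrightarrow> j \<le> J \<Longrightarrow> X j t \<in> borel_measurable M"
    and model: "\<And>t \<omega>. \<omega> \<in> space M \<Longrightarrow> Y t \<omega> = lincomb (Z t \<omega>) \<theta>0 + u t \<omega>"
    \<comment> \<open>(A1)\<close>
    and stat: "strictly_stationary M (joint_path J Y X)"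
    and erg: "ergodic_proc M (joint_path J Y X)"
    and Y_mom: "\<And>t. integrable M (\<lambda>\<omega>. (normK K (Y t \<omega>)) ^ 4)"
    and X_mom: "\<And>j t. 1 \<le> j \<Longrightarrow> j \<le> J \<Longrightarrow> integrable M (\<lambda>\<omega>. (normK K (X j t \<omega>)) ^ 4)"
    and u_mds: "\<And>t v. v \<in> dirs \<Longrightarrow>
       AE \<omega> in M. real_cond_exp M (info M J Y X (t - 1)) (\<lambda>\<omega>. supp (u t \<omega>) v) \<omega> = 0"
    and u_var: "\<And>t.
       AE \<omega> in M. real_cond_exp M (info M J Y X (t - 1)) (\<lambda>\<omega>. (normK K (u t \<omega>))\<^sup>2) \<omega> = \<sigma>2"
    \<comment> \<open>(A2)\<close>
    and Theta_compact: "compact \<Theta>"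
    and theta0_int: "\<theta>0 \<in> interior \<Theta>"
    \<comment> \<open>(A3)\<close>
    and A3: "\<exists>e>0. \<forall>\<theta>\<in>ball \<theta>0 e. \<forall>t.
        pos_def_mat (\<chi> i j. integral\<^sup>L M (\<lambda>\<omega>. ipK K (Z t \<omega> $ i) (Z t \<omega> $ j))) \<and>
        pos_def_mat (\<chi> i j. integral\<^sup>L M (\<lambda>\<omega>.
            ipK K (Z t \<omega> $ i) (Y t \<omega> - lincomb (Z t \<omega>) \<theta>) *
            ipK K (Y t \<omega> - lincomb (Z t \<omega>) \<theta>) (Z t \<omega> $ j)))"
    \<comment> \<open>(A4)\<close>
    and lam_pos: "\<And>T. lam T > 0"
    and gamma_pos: "\<gamma> > 0"
    and lam_rate1: "(\<lambda>T. lam T / sqrt (real T)) \<longlonglongrightarrow> 0"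
    and lam_rate2: "filterlim (\<lambda>T. lam T * real T powr ((\<gamma> - 1) / 2)) at_top sequentially"
    \<comment> \<open>estimators\<close>
    and tilde_min: "\<And>T \<omega>. \<omega> \<in> space M \<Longrightarrow> \<theta>tilde T \<omega> \<in> \<Theta> \<and>
        (\<forall>\<theta>\<in>\<Theta>. DK_obj K Y Z T \<omega> (\<theta>tilde T \<omega>) \<le> DK_obj K Y Z T \<omega> \<theta>)"
    and hat_min: "\<And>T \<omega>. \<omega> \<in> space M \<Longrightarrow>
        \<theta>hat T \<omega> \<in> adalasso_dom \<Theta> (\<theta>tilde T \<omega>) \<and>
        (\<forall>\<theta>\<in>adalasso_dom \<Theta> (\<theta>tilde T \<omega>).
           adalasso_obj K Y Z (lam T) \<gamma> (\<theta>tilde T \<omega>) T \<omega> (\<theta>hat T \<omega>)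
             \<le> adalasso_obj K Y Z (lam T) \<gamma> (\<theta>tilde T \<omega>) T \<omega> \<theta>)"
    and hat_rv: "\<And>T. \<theta>hat T \<in> borel_measurable M"
  shows "bigO_p M (\<lambda>T \<omega>. norm (\<theta>hat T \<omega> - \<theta>0)) (\<lambda>T. 1 / sqrt (real T))"
proof -
  interpret acix M K q J s p idx Y X u \<theta>0
  proof (intro acix.intro)
    show "\<And>t \<omega>. \<omega> \<in> space M \<Longrightarrow> Y t \<omega> = lincomb (Zvec idx q J Y X t \<omega>) \<theta>0 + u t \<omega>"
      using model unfolding Z_def by blast
  qed (use prob kernel p_def idx Y_rv X_rv stat erg Y_mom X_mom u_mds in auto)
  have th0: "\<theta>0 \<in> \<Theta>" using theta0_int interior_subset by blast
  obtain e where e: "e > 0" and A3': "\<forall>\<theta>\<in>ball \<theta>0 e. \<forall>t.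
        pos_def_mat (\<chi> i j. integral\<^sup>L M (\<lambda>\<omega>. ipK K (Z t \<omega> $ i) (Z t \<omega> $ j))) \<and>
        pos_def_mat (\<chi> i j. integral\<^sup>L M (\<lambda>\<omega>.
            ipK K (Z t \<omega> $ i) (Y t \<omega> - lincomb (Z t \<omega>) \<theta>) *
            ipK K (Y t \<omega> - lincomb (Z t \<omega>) \<theta>) (Z t \<omega> $ j)))"
    using A3 by blast
  have "pos_def_mat (\<chi> i j. integral\<^sup>L M (\<lambda>\<omega>. ipK K (Z 0 \<omega> $ i) (Z 0 \<omega> $ j)))"
  proof -
    have b: "\<theta>0 \<in> ball \<theta>0 e" using e by simp
    show ?thesis using conjunct1[OF A3'[rule_format, OF b, of 0]] .
  qed
  then have pd: "pos_def_mat (\<chi> i j. Amat i j)" unfolding Amat_def Z_def .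
  show ?thesis
    by (rule main[OF th0 pd lam_pos gamma_pos lam_rate1 tilde_min[unfolded Z_def] hat_min[unfolded Z_def]])
qed

end
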